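(* In the setting described in the context, suppose $m>p\ge2$, $0\le w_l<1$ for each $l=1,\ldots,m$, and $f(\mathbf{w})>0$. Fix $i\in\{1,\ldots,m\}$ and let $a,b,A,B$ be as defined in the context. Then the solution of $\max_{0\le x\le1}h_i(x)$ belongs to one of the following four cases: (1) If $A\ne B$, $A>0$, $B>0$, $a>b$, $aB>bA$, and $bA<(a-b)B$, then \[ \max_{0\le x\le1}h_i(x)=\left(\frac{\sqrt{A(a-b)}-\sqrt{aB-bA}}{A-B}\right)^2, \] attained uniquely at $x_*=\frac{t_*-B}{A-B}\in(0,1)$, where $t_*=\sqrt{\frac{A(aB-bA)}{a-b}}\in(\min\{A,B\},\max\{A,B\})$; (2) If $A=B$ and $a>2b$, then $\max_{0\le x\le1}h_i(x)=\frac{a^2}{4(a-b)B}>0$, attained uniquely at $x_*=\frac{a-2b}{2a-2b}\in(0,1)$; (3) If $A\ne B$, $B=0$, and $b=0$, then $\max_{0\le x\le1}h_i(x)=\frac{a}{A}>0$, attained uniquely at $x_*=0$; (4) For all other cases, $\max_{0\le x\le1}h_i(x)=\frac{b}{B}>0$, attained at the unique $x_*=0$.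
   Context: Given a model matrix $\mathbf{X}\in\mathbb{R}^{m\times p}$ (rows $\mathbf{q}(\mathbf{x}_i)^T$ for distinct design points under a generalized linear model) and numbers $\nu_1,\ldots,\nu_m\ge0$ (where $\nu_i=(\partial\mu_i/\partial\eta_i)^2/\mathrm{Var}(Y_i)$), for $\mathbf{w}=(w_1,\ldots,w_m)^T$ with $w_l\ge0$, $\sum_lw_l=1$, let $\mathbf{W}=\mathrm{diag}\{w_1\nu_1,\ldots,w_m\nu_m\}$, $f(\mathbf{w})=|\mathbf{X}^T\mathbf{W}\mathbf{X}|$, $f_{-j}(\mathbf{w})=|\mathbf{X}_{-j}^T\mathbf{W}\mathbf{X}_{-j}|$ for $j=1,\ldots,p$ (with $\mathbf{X}_{-j}$ being $\mathbf{X}$ with its $j$th column removed), and $h(\mathbf{w})=[\mathrm{tr}((\mathbf{X}^T\mathbf{W}\mathbf{X})^{-1})]^{-1}$ if $f(\mathbf{w})>0$, $h(\mathbf{w})=0$ otherwise. For $i$ with $0\le w_i<1$ and $x\in[0,1]$, let $\mathbf{w}^{(i)}(x)=\big(\tfrac{1-x}{1-w_i}w_1,\ldots,\tfrac{1-x}{1-w_i}w_{i-1},x,\tfrac{1-x}{1-w_i}w_{i+1},\ldots,\tfrac{1-x}{1-w_i}w_m\big)^T$, $f_i(x)=f(\mathbf{w}^{(i)}(x))$, $f_i^{(-j)}(x)=f_{-j}(\mathbf{w}^{(i)}(x))$, and $h_i(x)=h(\mathbf{w}^{(i)}(x))$. Define constants: if $0<w_i<1$, $b=f_i(0)$, $a=[f(\mathbf{w})-b(1-w_i)^p]/[w_i(1-w_i)^{p-1}]$,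 $b_j=f_i^{(-j)}(0)$, $a_j=[f_{-j}(\mathbf{w})-b_j(1-w_i)^{p-1}]/[w_i(1-w_i)^{p-2}]$; if $w_i=0$, $b=f(\mathbf{w})$, $a=2^pf_i(1/2)-b$, $b_j=f_{-j}(\mathbf{w})$, $a_j=2^{p-1}f_i^{(-j)}(1/2)-b_j$. (Then $f_i(x)=ax(1-x)^{p-1}+b(1-x)^p$ and $f_i^{(-j)}(x)=a_jx(1-x)^{p-2}+b_j(1-x)^{p-1}$ with all these constants nonnegative.) Finally let $A=\sum_{j=1}^pa_j$ and $B=\sum_{j=1}^pb_j$. *)

theory Defs
  imports "Jordan_Normal_Form.Determinant" "Jordan_Normal_Form.Gauss_Jordan_Elimination"
begin

(* Conventions: the model matrix X is an m x p JNF matrix (rows/cols indexed from 0),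
   weights w and numbers nu are functions nat => real, only their values at 0..<m matter.
   Design-point index i and column index j are 0-based. *)

definition mtrace :: "real mat \<Rightarrow> real" where
  "mtrace M = (\<Sum>k<dim_row M. M $$ (k,k))"

definition Wmat :: "nat \<Rightarrow> (nat \<Rightarrow> real) \<Rightarrow> (nat \<Rightarrow> real) \<Rightarrow> real mat" where
  "Wmat m nu w = mat m m (\<lambda>(r,c). if r = c then w r * nu r else 0)"

definition info_mat :: "real mat \<Rightarrow> (nat \<Rightarrow> real) \<Rightarrow> (nat \<Rightarrow> real) \<Rightarrow> real mat" where
  "info_mat X nu w = transpose_mat X * Wmat (dim_row X) nu w * X"

definition fdet :: "real mat \<Rightarrow> (nat \<Rightarrow> real) \<Rightarrow> (nat \<Rightarrow> real) \<Rightarrow> real" where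
  "fdet X nu w = det (info_mat X nu w)"

definition del_col :: "real mat \<Rightarrow> nat \<Rightarrow> real mat" where
  "del_col X j = mat (dim_row X) (dim_col X - 1) (\<lambda>(r,c). X $$ (r, if c < j then c else Suc c))"

definition fdet_minus :: "real mat \<Rightarrow> (nat \<Rightarrow> real) \<Rightarrow> (nat \<Rightarrow> real) \<Rightarrow> nat \<Rightarrow> real" where
  "fdet_minus X nu w j = fdet (del_col X j) nu w"

definition hfun :: "real mat \<Rightarrow> (nat \<Rightarrow> real) \<Rightarrow> (nat \<Rightarrow> real) \<Rightarrow> real" where
  "hfun X nu w = (if fdet X nu w > 0
      then 1 / mtrace (the (mat_inverse (info_mat X nu w))) else 0)"

definition wpath :: "(nat \<Rightarrow> real) \<Rightarrow> nat \<Rightarrow> real \<Rightarrow> (nat \<Rightarrow> real)" where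
  "wpath w i x = (\<lambda>l. if l = i then x else (1 - x) / (1 - w i) * w l)"

definition b_const :: "real mat \<Rightarrow> (nat \<Rightarrow> real) \<Rightarrow> (nat \<Rightarrow> real) \<Rightarrow> nat \<Rightarrow> real" where
  "b_const X nu w i = (if w i = 0 then fdet X nu w else fdet X nu (wpath w i 0))"

definition a_const :: "real mat \<Rightarrow> (nat \<Rightarrow> real) \<Rightarrow> (nat \<Rightarrow> real) \<Rightarrow> nat \<Rightarrow> real" where
  "a_const X nu w i = (let p = dim_col X; b = b_const X nu w i in
     if w i = 0 then 2 ^ p * fdet X nu (wpath w i (1/2)) - b
     else (fdet X nu w - b * (1 - w i) ^ p) / (w i * (1 - w i) ^ (p - 1)))"

definition bj_const :: "real mat \<Rightarrow> (nat \<Rightarrow> real) \<Rightarrow> (nat \<Rightarrow> real) \<Rightarrow> nat \<Rightarrow> nat \<Rightarrow> real" where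
  "bj_const X nu w i j = (if w i = 0 then fdet_minus X nu w j else fdet_minus X nu (wpath w i 0) j)"

definition aj_const :: "real mat \<Rightarrow> (nat \<Rightarrow> real) \<Rightarrow> (nat \<Rightarrow> real) \<Rightarrow> nat \<Rightarrow> nat \<Rightarrow> real" where
  "aj_const X nu w i j = (let p = dim_col X; bj = bj_const X nu w i j in
     if w i = 0 then 2 ^ (p - 1) * fdet_minus X nu (wpath w i (1/2)) j - bj
     else (fdet_minus X nu w j - bj * (1 - w i) ^ (p - 1)) / (w i * (1 - w i) ^ (p - 2)))"

definition A_const :: "real mat \<Rightarrow> (nat \<Rightarrow> real) \<Rightarrow> (nat \<Rightarrow> real) \<Rightarrow> nat \<Rightarrow> real" where
  "A_const X nu w i = (\<Sum>j<dim_col X. aj_const X nu w i j)"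

definition B_const :: "real mat \<Rightarrow> (nat \<Rightarrow> real) \<Rightarrow> (nat \<Rightarrow> real) \<Rightarrow> nat \<Rightarrow> real" where
  "B_const X nu w i = (\<Sum>j<dim_col X. bj_const X nu w i j)"

definition unique_max_on01 :: "(real \<Rightarrow> real) \<Rightarrow> real \<Rightarrow> real \<Rightarrow> bool" where
  "unique_max_on01 g xs v \<longleftrightarrow> 0 \<le> xs \<and> xs \<le> 1 \<and> g xs = v \<and>
      (\<forall>x. 0 \<le> x \<and> x \<le> 1 \<and> x \<noteq> xs \<longrightarrow> g x < v)"

end

theory Submission
  imports Defs
begin
lemma info_mat_carrier: "Y \<in> carrier_mat m k \<Longrightarrow> info_mat Y nu d \<in> carrier_mat k k"
  unfolding info_mat_def Wmat_def by auto

lemma info_mat_entry: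
  assumes Y: "Y \<in> carrier_mat m k" and r: "r < k" and c: "c < k"
  shows "info_mat Y nu d $$ (r,c) = (\<Sum>l<m. Y $$ (l,r) * (d l * nu l) * Y $$ (l,c))"
proof -
  let ?W = "Wmat m nu d"
  have W: "?W \<in> carrier_mat m m" unfolding Wmat_def by auto
  have TW: "(transpose_mat Y * ?W) $$ (r,l) = Y $$ (l,r) * (d l * nu l)" if l: "l < m" for l
  proof -
    have "(transpose_mat Y * ?W) $$ (r,l) = (\<Sum>s<m. Y $$ (s,r) * ?W $$ (s,l))"
      using Y W r l by (auto simp: scalar_prod_def atLeast0LessThan intro!: sum.cong)
    also have "\<dots> = (\<Sum>s<m. if s = l then Y $$ (l,r) * (d l * nu l) else 0)"
      using l by (intro sum.cong) (auto simp: Wmat_def)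
    also have "\<dots> = Y $$ (l,r) * (d l * nu l)" using l by simp
    finally show ?thesis .
  qed
  have "info_mat Y nu d $$ (r,c) = (\<Sum>l<m. (transpose_mat Y * ?W) $$ (r,l) * Y $$ (l,c))"
  proof -
    have dr: "dim_row Y = m" using Y by auto
    have "info_mat Y nu d $$ (r,c) = row (transpose_mat Y * ?W) r \<bullet> col Y c"
      unfolding info_mat_def dr using Y W r c by (intro index_mult_mat) auto
    also have "\<dots> = (\<Sum>l<m. (transpose_mat Y * ?W) $$ (r,l) * Y $$ (l,c))"
      using Y W r c by (auto simp: scalar_prod_def atLeast0LessThan)
    finally show ?thesis .
  qed
  also have "\<dots> = (\<Sum>l<m. Y $$ (l,r) * (d l * nu l) * Y $$ (l,c))"
    using TW by (intro sum.cong) auto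
  finally show ?thesis .
qed

lemma mdl:
  fixes G :: "real mat" and v :: "nat \<Rightarrow> real"
  assumes G: "G \<in> carrier_mat n n"
  shows "det (mat n n (\<lambda>(r,c). G$$(r,c) + t * v r * v c)) =
         det G + t * (\<Sum>r<n. \<Sum>c<n. v r * v c * cofactor G r c)"
proof -
  define Bm where "Bm = mat (Suc n) (Suc n) (\<lambda>(r,c). if r = 0 then (if c = 0 then 1 else - t * v (c-1))
      else (if c = 0 then v (r-1) else G$$(r-1,c-1)))"
  define L where "L = mat (Suc n) (Suc n) (\<lambda>(r,c). if r = c then 1 else if c = 0 then v (r-1) else (0::real))"
  define C where "C = mat (Suc n) (Suc n) (\<lambda>(r,c). if r = 0 then (if c = 0 then 1 else - t * v (c-1))
      else if c = 0 then 0 else G$$(r-1,c-1) + t * v (r-1) * v (c-1))"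
  define G' where "G' = mat n n (\<lambda>(r,c). G$$(r,c) + t * v r * v c)"
  have Lc: "L \<in> carrier_mat (Suc n) (Suc n)" and Cc: "C \<in> carrier_mat (Suc n) (Suc n)"
    and Bc: "Bm \<in> carrier_mat (Suc n) (Suc n)" unfolding L_def C_def Bm_def by auto
  have BLC: "Bm = L * C"
  proof (rule eq_matI)
    fix r c assume r: "r < dim_row (L * C)" and c: "c < dim_col (L * C)"
    hence r': "r < Suc n" and c': "c < Suc n" using Lc Cc by auto
    have "(L * C) $$ (r,c) = (\<Sum>k<Suc n. L $$ (r,k) * C $$ (k,c))"
      using Lc Cc r' c' by (auto simp: scalar_prod_def atLeast0LessThan)
    also have "\<dots> = Bm $$ (r,c)"
    proof (cases r)
      case 0
      have "(\<Sum>k<Suc n. L $$ (r,k) * C $$ (k,c)) = (\<Sum>k<Suc n. if k = 0 then C $$ (0,c) else 0)"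
        using 0 by (intro sum.cong) (auto simp: L_def)
      also have "\<dots> = C $$ (0,c)" by simp
      finally show ?thesis using 0 c' by (auto simp: C_def Bm_def)
    next
      case (Suc r0)
      have "(\<Sum>k<Suc n. L $$ (r,k) * C $$ (k,c)) =
          (\<Sum>k<Suc n. (if k = r then C $$ (r,c) else 0) + (if k = 0 then v r0 * C $$ (0,c) else 0))"
        using Suc r' by (intro sum.cong) (auto simp: L_def)
      also have "\<dots> = C $$ (r,c) + v r0 * C $$ (0,c)"
        using r' by (simp add: sum.distrib)
      also have "\<dots> = Bm $$ (r,c)" using Suc r' c' by (auto simp: C_def Bm_def)
      finally show ?thesis .
    qed
    finally show "Bm $$ (r,c) = (L * C) $$ (r,c)" by simp
  qed (insert Lc Cc, auto simp: Bm_def)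
  have detL: "det L = 1"
  proof -
    have "det L = (\<Sum>j<Suc n. L $$ (0,j) * cofactor L 0 j)"
      by (rule laplace_expansion_row[OF Lc]) simp
    also have "\<dots> = (\<Sum>j<Suc n. if j = 0 then cofactor L 0 0 else 0)"
      by (intro sum.cong) (auto simp: L_def)
    also have "\<dots> = det (mat_delete L 0 0)" by (simp add: cofactor_def)
    also have "mat_delete L 0 0 = 1\<^sub>m n"
      by (rule eq_matI) (auto simp: mat_delete_def L_def)
    finally show ?thesis by simp
  qed
  have detC: "det C = det G'"
  proof -
    have "det C = (\<Sum>i<Suc n. C $$ (i,0) * cofactor C i 0)"
      by (rule laplace_expansion_column[OF Cc]) simp
    also have "\<dots> = (\<Sum>i<Suc n. if i = 0 then cofactor C 0 0 else 0)"
      by (intro sum.cong) (auto simp: C_def)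
    also have "\<dots> = det (mat_delete C 0 0)" by (simp add: cofactor_def)
    also have "mat_delete C 0 0 = G'"
      by (rule eq_matI) (auto simp: mat_delete_def C_def G'_def)
    finally show ?thesis .
  qed
  have detB1: "det Bm = det G'"
    using BLC det_mult[OF Lc Cc] detL detC by simp
  have E: "det (mat_delete Bm 0 (Suc c)) = (\<Sum>r<n. v r * (-1)^r * det (mat_delete G r c))"
    if c: "c < n" for c
  proof -
    define E where "E = mat_delete Bm 0 (Suc c)"
    have Ec: "E \<in> carrier_mat n n" unfolding E_def using mat_delete_carrier[OF Bc] by simp
    have "det E = (\<Sum>r<n. E $$ (r,0) * cofactor E r 0)"
      by (rule laplace_expansion_column[OF Ec]) (use c in simp)
    also have "\<dots> = (\<Sum>r<n. v r * (-1)^r * det (mat_delete G r c))"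
    proof (intro sum.cong refl)
      fix r assume r: "r \<in> {..<n}"
      have e0: "E $$ (r,0) = v r" using r c unfolding E_def Bm_def mat_delete_def by auto
      have "mat_delete E r 0 = mat_delete G r c"
        by (rule eq_matI) (use r c G in \<open>auto simp: E_def Bm_def mat_delete_def\<close>)
      thus "E $$ (r,0) * cofactor E r 0 = v r * (-1)^r * det (mat_delete G r c)"
        using e0 by (simp add: cofactor_def)
    qed
    finally show ?thesis unfolding E_def .
  qed
  have "det Bm = (\<Sum>j<Suc n. Bm $$ (0,j) * cofactor Bm 0 j)"
    by (rule laplace_expansion_row[OF Bc]) simp
  also have "\<dots> = Bm $$ (0,0) * cofactor Bm 0 0 + (\<Sum>c<n. Bm $$ (0,Suc c) * cofactor Bm 0 (Suc c))"
    by (rule sum.lessThan_Suc_shift)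
  also have "Bm $$ (0,0) * cofactor Bm 0 0 = det G"
  proof -
    have "mat_delete Bm 0 0 = G"
      by (rule eq_matI) (use G in \<open>auto simp: Bm_def mat_delete_def\<close>)
    thus ?thesis by (simp add: cofactor_def Bm_def)
  qed
  also have "(\<Sum>c<n. Bm $$ (0,Suc c) * cofactor Bm 0 (Suc c)) =
      (\<Sum>c<n. t * (\<Sum>r<n. v r * v c * cofactor G r c))"
  proof (intro sum.cong refl)
    fix c assume c: "c \<in> {..<n}"
    have "Bm $$ (0,Suc c) * cofactor Bm 0 (Suc c) =
        (- t * v c) * ((-1)^(Suc c) * (\<Sum>r<n. v r * (-1)^r * det (mat_delete G r c)))"
      using c E[of c] by (simp add: Bm_def cofactor_def)
    also have "\<dots> = t * (\<Sum>r<n. v r * v c * ((-1)^(r+c) * det (mat_delete G r c)))"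
      by (simp add: sum_distrib_left power_add mult_ac)
    finally show "Bm $$ (0,Suc c) * cofactor Bm 0 (Suc c) = t * (\<Sum>r<n. v r * v c * cofactor G r c)"
      by (simp add: cofactor_def)
  qed
  also have "(\<Sum>c<n. t * (\<Sum>r<n. v r * v c * cofactor G r c)) = t * (\<Sum>r<n. \<Sum>c<n. v r * v c * cofactor G r c)"
  proof -
    have "(\<Sum>c<n. t * (\<Sum>r<n. v r * v c * cofactor G r c)) = t * (\<Sum>c<n. \<Sum>r<n. v r * v c * cofactor G r c)"
      by (simp add: sum_distrib_left)
    also have "(\<Sum>c<n. \<Sum>r<n. v r * v c * cofactor G r c) = (\<Sum>r<n. \<Sum>c<n. v r * v c * cofactor G r c)"
      by (rule sum.swap)
    finally show ?thesis .
  qed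
  finally show ?thesis using detB1 unfolding G'_def by simp
qed

lemma sumsq_pos:
  fixes v :: "real vec"
  assumes v: "v \<in> carrier_vec n" "v \<noteq> 0\<^sub>v n"
  shows "(\<Sum>r<n. v$r * v$r) > 0"
proof -
  obtain r where r: "r < n" "v$r \<noteq> 0" using v by (metis eq_vecI carrier_vecD index_zero_vec(1,2))
  have "(\<Sum>r<n. v$r * v$r) \<ge> v$r * v$r"
    using r by (intro member_le_sum) auto
  moreover have "v$r * v$r > 0" using r(2) by (metis linorder_neqE_linordered_idom mult_neg_neg mult_pos_pos)
  ultimately show ?thesis by linarith
qed

lemma psd_det_nonneg:
  fixes M :: "real mat"
  assumes M: "M \<in> carrier_mat n n"
  and psd: "\<And>u. (\<Sum>r<n. \<Sum>c<n. u r * M$$(r,c) * u c) \<ge> 0"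
  shows "det M \<ge> 0"
proof (rule ccontr)
  assume neg: "\<not> det M \<ge> 0"
  define Q where "Q \<tau> = mat n n (\<lambda>(r,c). \<tau> * M$$(r,c) + (if r = c then 1 - \<tau> else 0))" for \<tau> :: real
  have Qc: "Q \<tau> \<in> carrier_mat n n" for \<tau> unfolding Q_def by auto
  have detQ: "det (Q \<tau>) = (\<Sum>p\<in>{p. p permutes {0..<n}}. signof p *
      (\<Prod>i = 0..<n. \<tau> * M$$(i,p i) + (if i = p i then 1 else 0) * (1 - \<tau>)))" for \<tau>
    unfolding det_def'[OF Qc]
  proof (intro sum.cong refl arg_cong2[where f="(*)"] prod.cong)
    fix p i assume p: "p \<in> {p. p permutes {0..<n}}" and i: "i \<in> {0..<n}"
    have "p i < n" using p i by (simp add: permutes_in_image)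
    thus "Q \<tau> $$ (i, p i) = \<tau> * M$$(i,p i) + (if i = p i then 1 else 0) * (1 - \<tau>)"
      using i by (simp add: Q_def)
  qed
  have cont: "continuous_on {0..1} (\<lambda>\<tau>. det (Q \<tau>))"
    unfolding detQ by (intro continuous_intros)
  have nz: "det (Q \<tau>) \<noteq> 0" if t: "0 \<le> \<tau>" "\<tau> < 1" for \<tau>
  proof
    assume "det (Q \<tau>) = 0"
    then obtain v where v: "v \<in> carrier_vec n" "v \<noteq> 0\<^sub>v n" "Q \<tau> *\<^sub>v v = 0\<^sub>v n"
      using det_0_iff_vec_prod_zero_field[OF Qc] by blast
    have row: "(Q \<tau> *\<^sub>v v) $ r = \<tau> * (\<Sum>c<n. M$$(r,c) * v$c) + (1 - \<tau>) * v$r" if r: "r < n" for r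
    proof -
      have "(Q \<tau> *\<^sub>v v) $ r = (\<Sum>c<n. Q \<tau> $$ (r,c) * v$c)"
        using r v(1) Qc[of \<tau>] by (auto simp: scalar_prod_def atLeast0LessThan)
      also have "\<dots> = (\<Sum>c<n. \<tau> * (M$$(r,c) * v$c) + (if c = r then (1 - \<tau>) * v$r else 0))"
        using r by (intro sum.cong) (auto simp: Q_def algebra_simps)
      also have "\<dots> = \<tau> * (\<Sum>c<n. M$$(r,c) * v$c) + (1 - \<tau>) * v$r"
        using r by (simp add: sum.distrib sum_distrib_left)
      finally show ?thesis .
    qed
    have "0 = (\<Sum>r<n. v$r * (Q \<tau> *\<^sub>v v) $ r)" using v(3) by simp
    also have "\<dots> = (\<Sum>r<n. \<tau> * (\<Sum>c<n. v$r * M$$(r,c) * v$c) + (1 - \<tau>) * (v$r * v$r))"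
    proof (intro sum.cong refl)
      fix r assume "r \<in> {..<n}"
      hence r: "r < n" by simp
      have e: "(\<Sum>c<n. v$r * M$$(r,c) * v$c) = v$r * (\<Sum>c<n. M$$(r,c) * v$c)"
        by (simp add: sum_distrib_left mult.assoc)
      show "v$r * (Q \<tau> *\<^sub>v v) $ r = \<tau> * (\<Sum>c<n. v$r * M$$(r,c) * v$c) + (1 - \<tau>) * (v$r * v$r)"
        unfolding e row[OF r] by (simp add: algebra_simps)
    qed
    also have "\<dots> = \<tau> * (\<Sum>r<n. \<Sum>c<n. v$r * M$$(r,c) * v$c) + (1 - \<tau>) * (\<Sum>r<n. v$r * v$r)"
      by (simp add: sum.distrib sum_distrib_left)
    also have "\<dots> > 0"
    proof -
      have "\<tau> * (\<Sum>r<n. \<Sum>c<n. v$r * M$$(r,c) * v$c) \<ge> 0"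
        using t psd[of "\<lambda>r. v$r"] by simp
      moreover have "(1 - \<tau>) * (\<Sum>r<n. v$r * v$r) > 0"
        using t sumsq_pos[OF v(1,2)] by simp
      ultimately show ?thesis by linarith
    qed
    finally show False by simp
  qed
  have Q0: "det (Q 0) = 1"
  proof -
    have "Q 0 = 1\<^sub>m n" by (rule eq_matI) (auto simp: Q_def)
    thus ?thesis by simp
  qed
  have Q1: "det (Q 1) = det M"
  proof -
    have "Q 1 = M" by (rule eq_matI) (use M in \<open>auto simp: Q_def\<close>)
    thus ?thesis by simp
  qed
  obtain x where x: "0 \<le> x" "x \<le> 1" "det (Q x) = 0"
    using IVT2'[of "\<lambda>\<tau>. det (Q \<tau>)" 1 0 0, OF _ _ _ cont] Q0 Q1 neg by auto
  have "x \<noteq> 1" using x Q1 neg by auto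
  with x nz show False by auto
qed

lemma wcs:
  fixes \<delta> a b :: "nat \<Rightarrow> real"
  assumes fin: "finite A" and nn: "\<And>l. l \<in> A \<Longrightarrow> \<delta> l \<ge> 0"
  shows "(\<Sum>l\<in>A. \<delta> l * a l * b l)^2 \<le> (\<Sum>l\<in>A. \<delta> l * (a l)^2) * (\<Sum>l\<in>A. \<delta> l * (b l)^2)"
proof -
  define Saa where "Saa = (\<Sum>l\<in>A. \<delta> l * (a l)^2)"
  define Sab where "Sab = (\<Sum>l\<in>A. \<delta> l * a l * b l)"
  define Sbb where "Sbb = (\<Sum>l\<in>A. \<delta> l * (b l)^2)"
  have q: "0 \<le> Saa - 2 * lam * Sab + lam^2 * Sbb" for lam
  proof -
    have "0 \<le> (\<Sum>l\<in>A. \<delta> l * (a l - lam * b l)^2)"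
      using nn by (intro sum_nonneg) auto
    also have "\<dots> = (\<Sum>l\<in>A. \<delta> l * (a l)^2 - 2 * lam * (\<delta> l * a l * b l) + lam^2 * (\<delta> l * (b l)^2))"
      by (intro sum.cong) (auto simp: power2_eq_square algebra_simps)
    also have "\<dots> = Saa - 2 * lam * Sab + lam^2 * Sbb"
      unfolding Saa_def Sab_def Sbb_def
      by (simp add: sum.distrib sum_subtractf sum_distrib_left)
    finally show ?thesis .
  qed
  have Sbb0: "Sbb \<ge> 0" unfolding Sbb_def using nn by (intro sum_nonneg) auto
  show ?thesis
  proof (cases "Sbb = 0")
    case True
    have "Sab = 0"
    proof (rule ccontr)
      assume "Sab \<noteq> 0"
      have "0 \<le> Saa - 2 * ((Saa + 1) / (2 * Sab)) * Sab" using q[of "(Saa + 1) / (2 * Sab)"] True by simp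
      also have "\<dots> = -1" using \<open>Sab \<noteq> 0\<close> by (simp add: field_simps)
      finally show False by simp
    qed
    thus ?thesis using True unfolding Saa_def[symmetric] Sab_def[symmetric] Sbb_def[symmetric] by simp
  next
    case False
    hence pos: "Sbb > 0" using Sbb0 by simp
    have "0 \<le> Saa - 2 * (Sab / Sbb) * Sab + (Sab / Sbb)^2 * Sbb" by (rule q)
    also have "\<dots> = (Saa * Sbb - Sab^2) / Sbb" using pos by (simp add: field_simps power2_eq_square)
    finally have "0 \<le> Saa * Sbb - Sab^2" using pos by (simp add: divide_nonneg_pos zero_le_divide_iff)
    thus ?thesis unfolding Saa_def[symmetric] Sab_def[symmetric] Sbb_def[symmetric] by simp
  qed
qed

lemma gram_bil:
  assumes Y: "Y \<in> carrier_mat m k"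
  shows "(\<Sum>r<k. \<Sum>c<k. x r * info_mat Y nu d $$ (r,c) * y c) =
    (\<Sum>l<m. (d l * nu l) * (\<Sum>r<k. Y $$ (l,r) * x r) * (\<Sum>c<k. Y $$ (l,c) * y c))"
proof -
  have "(\<Sum>r<k. \<Sum>c<k. x r * info_mat Y nu d $$ (r,c) * y c) =
      (\<Sum>r<k. \<Sum>c<k. \<Sum>l<m. (d l * nu l) * (Y $$ (l,r) * x r) * (Y $$ (l,c) * y c))"
    by (intro sum.cong refl) (simp add: info_mat_entry[OF Y] sum_distrib_left sum_distrib_right mult_ac)
  also have "\<dots> = (\<Sum>r<k. \<Sum>l<m. \<Sum>c<k. (d l * nu l) * (Y $$ (l,r) * x r) * (Y $$ (l,c) * y c))"
    by (rule sum.cong[OF refl], rule sum.swap)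
  also have "\<dots> = (\<Sum>l<m. \<Sum>r<k. \<Sum>c<k. (d l * nu l) * (Y $$ (l,r) * x r) * (Y $$ (l,c) * y c))"
    by (rule sum.swap)
  also have "\<dots> = (\<Sum>l<m. (d l * nu l) * (\<Sum>r<k. Y $$ (l,r) * x r) * (\<Sum>c<k. Y $$ (l,c) * y c))"
    by (intro sum.cong refl) (simp add: sum_product sum_distrib_left mult_ac)
  finally show ?thesis .
qed

lemma gram_psd:
  assumes Y: "Y \<in> carrier_mat m k" and nn: "\<forall>l<m. d l * nu l \<ge> 0"
  shows "(\<Sum>r<k. \<Sum>c<k. u r * info_mat Y nu d $$ (r,c) * u c) \<ge> 0"
  unfolding gram_bil[OF Y]
proof (intro sum_nonneg)
  fix l assume "l \<in> {..<m}"
  hence "0 \<le> (d l * nu l) * ((\<Sum>r<k. Y $$ (l,r) * u r) * (\<Sum>r<k. Y $$ (l,r) * u r))"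
    using nn by (intro mult_nonneg_nonneg[OF _ zero_le_square]) auto
  thus "0 \<le> (d l * nu l) * (\<Sum>r<k. Y $$ (l,r) * u r) * (\<Sum>c<k. Y $$ (l,c) * u c)"
    by (simp add: mult.assoc)
qed

lemma gram_det_nonneg:
  assumes Y: "Y \<in> carrier_mat m k" and nn: "\<forall>l<m. d l * nu l \<ge> 0"
  shows "det (info_mat Y nu d) \<ge> 0"
  by (rule psd_det_nonneg[OF info_mat_carrier[OF Y]]) (rule gram_psd[OF Y nn])

lemma rayleigh:
  fixes Y :: "real mat" and u :: "nat \<Rightarrow> real"
  assumes Y: "Y \<in> carrier_mat m k" and nn: "\<forall>l<m. d l * nu l \<ge> 0"
  and fpos: "det (info_mat Y nu d) > 0" and Upos: "(\<Sum>r<k. u r * u r) > 0"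
  shows "det (info_mat Y nu d) * (\<Sum>r<k. u r * u r) \<le>
    (\<Sum>r<k. \<Sum>c<k. u r * info_mat Y nu d $$ (r,c) * u c) * (\<Sum>j<k. det (mat_delete (info_mat Y nu d) j j))"
proof -
  define M where "M = info_mat Y nu d"
  define f where "f = det M"
  have fp: "f > 0" using fpos unfolding f_def M_def .
  have Mc: "M \<in> carrier_mat k k" unfolding M_def by (rule info_mat_carrier[OF Y])
  define N where "N s c = cofactor M c s / f" for s c
  have MN: "(\<Sum>s<k. M$$(r,s) * N s c) = (if r = c then 1 else 0)" if rc: "r < k" "c < k" for r c
  proof -
    have "(M * adj_mat M) $$ (r,c) = (f \<cdot>\<^sub>m 1\<^sub>m k) $$ (r,c)" using adj_mat(2)[OF Mc] f_def by simp
    moreover have "(M * adj_mat M) $$ (r,c) = (\<Sum>s<k. M$$(r,s) * cofactor M c s)"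
    proof -
      have "(M * adj_mat M) $$ (r,c) = row M r \<bullet> col (adj_mat M) c"
        using rc Mc adj_mat(1)[OF Mc] by (intro index_mult_mat) auto
      also have "\<dots> = (\<Sum>s<k. M$$(r,s) * cofactor M c s)"
        using rc Mc adj_mat(1)[OF Mc] by (auto simp: scalar_prod_def atLeast0LessThan adj_mat_def intro!: sum.cong)
      finally show ?thesis .
    qed
    ultimately have "(\<Sum>s<k. M$$(r,s) * cofactor M c s) = (if r = c then f else 0)" using rc by simp
    hence "(\<Sum>s<k. M$$(r,s) * cofactor M c s) / f = (if r = c then 1 else 0)" using fp by simp
    moreover have "(\<Sum>s<k. M$$(r,s) * N s c) = (\<Sum>s<k. M$$(r,s) * cofactor M c s) / f"
      unfolding N_def by (simp add: sum_divide_distrib)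
    ultimately show ?thesis by simp
  qed
  define bil where "bil x y = (\<Sum>r<k. \<Sum>c<k. x r * M$$(r,c) * y c)" for x y
  have bilG: "bil x y = (\<Sum>l<m. (d l * nu l) * (\<Sum>r<k. Y$$(l,r) * x r) * (\<Sum>c<k. Y$$(l,c) * y c))" for x y
    unfolding bil_def M_def by (rule gram_bil[OF Y])
  have bilM: "bil x y = (\<Sum>r<k. x r * (\<Sum>c<k. M$$(r,c) * y c))" for x y
    unfolding bil_def by (simp add: sum_distrib_left mult.assoc)
  define y where "y s = (\<Sum>c<k. N s c * u c)" for s
  have My: "(\<Sum>s<k. M$$(r,s) * y s) = u r" if r: "r < k" for r
  proof -
    have "(\<Sum>s<k. M$$(r,s) * y s) = (\<Sum>s<k. \<Sum>c<k. M$$(r,s) * N s c * u c)"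
      by (simp add: y_def sum_distrib_left mult.assoc)
    also have "\<dots> = (\<Sum>c<k. \<Sum>s<k. M$$(r,s) * N s c * u c)" by (rule sum.swap)
    also have "\<dots> = (\<Sum>c<k. (\<Sum>s<k. M$$(r,s) * N s c) * u c)" by (simp add: sum_distrib_right)
    also have "\<dots> = (\<Sum>c<k. (if r = c then u c else 0))" using r MN by (intro sum.cong) auto
    also have "\<dots> = u r" using r by simp
    finally show ?thesis .
  qed
  define U where "U = (\<Sum>r<k. u r * u r)"
  define P where "P = (\<Sum>r<k. y r * u r)"
  have U1: "U = bil u y" unfolding bilM U_def using My by (intro sum.cong) auto
  have P1: "P = bil y y" unfolding bilM P_def using My by (intro sum.cong) auto
  define al where "al l = (\<Sum>r<k. Y$$(l,r) * u r)" for l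
  define be where "be l = (\<Sum>r<k. Y$$(l,r) * y r)" for l
  define de where "de l = d l * nu l" for l
  have bilu: "bil u u \<ge> 0" unfolding bil_def M_def by (rule gram_psd[OF Y nn])
  have cs: "U^2 \<le> bil u u * P"
  proof -
    have "U^2 = (\<Sum>l<m. de l * al l * be l)^2" using U1 bilG by (simp add: al_def be_def de_def)
    also have "\<dots> \<le> (\<Sum>l<m. de l * (al l)^2) * (\<Sum>l<m. de l * (be l)^2)"
      by (rule wcs) (use nn in \<open>auto simp: de_def\<close>)
    also have "(\<Sum>l<m. de l * (al l)^2) = bil u u"
      unfolding bilG by (simp add: al_def de_def power2_eq_square mult.assoc)
    also have "(\<Sum>l<m. de l * (be l)^2) = P"
      unfolding P1 bilG by (simp add: be_def de_def power2_eq_square mult.assoc)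
    finally show ?thesis .
  qed
  define z where "z l c = (\<Sum>s<k. Y$$(l,s) * N s c)" for l c
  have bez: "be l = (\<Sum>c<k. z l c * u c)" for l
  proof -
    have "be l = (\<Sum>r<k. \<Sum>c<k. Y$$(l,r) * N r c * u c)"
      by (simp add: be_def y_def sum_distrib_left mult.assoc)
    also have "\<dots> = (\<Sum>c<k. \<Sum>r<k. Y$$(l,r) * N r c * u c)" by (rule sum.swap)
    also have "\<dots> = (\<Sum>c<k. z l c * u c)" by (simp add: z_def sum_distrib_right)
    finally show ?thesis .
  qed
  have Pz: "P \<le> U * (\<Sum>l<m. de l * (\<Sum>c<k. (z l c)^2))"
  proof -
    have "P = (\<Sum>l<m. de l * (be l)^2)"
      unfolding P1 bilG by (simp add: be_def de_def power2_eq_square mult.assoc)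
    also have "\<dots> \<le> (\<Sum>l<m. de l * ((\<Sum>c<k. (z l c)^2) * U))"
    proof (intro sum_mono mult_left_mono)
      fix l assume l: "l \<in> {..<m}"
      show "de l \<ge> 0" using nn l by (simp add: de_def)
      have "(be l)^2 = (\<Sum>c<k. (\<lambda>_. 1) c * z l c * u c)^2" by (simp add: bez)
      also have "\<dots> \<le> (\<Sum>c<k. (\<lambda>_. 1) c * (z l c)^2) * (\<Sum>c<k. (\<lambda>_. 1) c * (u c)^2)"
        by (rule wcs) auto
      finally show "(be l)^2 \<le> (\<Sum>c<k. (z l c)^2) * U"
        by (simp add: U_def power2_eq_square)
    qed
    also have "\<dots> = U * (\<Sum>l<m. de l * (\<Sum>c<k. (z l c)^2))"
      by (simp add: sum_distrib_left mult_ac)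
    finally show ?thesis .
  qed
  have trz: "(\<Sum>l<m. de l * (\<Sum>c<k. (z l c)^2)) = (\<Sum>c<k. N c c)"
  proof -
    have "(\<Sum>l<m. de l * (\<Sum>c<k. (z l c)^2)) = (\<Sum>l<m. \<Sum>c<k. de l * (z l c)^2)"
      by (simp add: sum_distrib_left)
    also have "\<dots> = (\<Sum>c<k. \<Sum>l<m. de l * (z l c)^2)" by (rule sum.swap)
    also have "\<dots> = (\<Sum>c<k. bil (\<lambda>s. N s c) (\<lambda>s. N s c))"
      unfolding bilG by (simp add: z_def de_def power2_eq_square mult.assoc)
    also have "\<dots> = (\<Sum>c<k. N c c)"
    proof (intro sum.cong refl)
      fix c assume c: "c \<in> {..<k}"
      have "bil (\<lambda>s. N s c) (\<lambda>s. N s c) = (\<Sum>r<k. N r c * (if r = c then 1 else 0))"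
        unfolding bilM using MN c by (intro sum.cong) auto
      also have "\<dots> = N c c" using c by (simp add: if_distrib cong: if_cong)
      finally show "bil (\<lambda>s. N s c) (\<lambda>s. N s c) = N c c" .
    qed
    finally show ?thesis .
  qed
  define D where "D = (\<Sum>j<k. det (mat_delete M j j))"
  have trD: "(\<Sum>c<k. N c c) = D / f"
    unfolding D_def N_def cofactor_def by (simp add: sum_divide_distrib)
  have U0: "U > 0" using Upos U_def by simp
  have "U^2 \<le> bil u u * (U * (D / f))"
    using cs Pz trz trD bilu by (metis mult_left_mono order_trans)
  hence "U * U \<le> U * (bil u u * (D / f))" by (metis mult.left_commute power2_eq_square)
  hence "U \<le> bil u u * (D / f)" using U0 by (metis mult_le_cancel_left_pos)
  hence "f * U \<le> bil u u * D" using fp by (simp add: field_simps)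
  thus ?thesis unfolding f_def M_def U_def D_def bil_def .
qed

lemma del_col_carrier: "Y \<in> carrier_mat m k \<Longrightarrow> del_col Y j \<in> carrier_mat m (k - 1)"
  unfolding del_col_def by auto

lemma mat_delete_info:
  assumes Y: "Y \<in> carrier_mat m k" and j: "j < k"
  shows "mat_delete (info_mat Y nu d) j j = info_mat (del_col Y j) nu d"
proof (rule eq_matI)
  have Dc: "del_col Y j \<in> carrier_mat m (k - 1)" by (rule del_col_carrier[OF Y])
  show "dim_row (mat_delete (info_mat Y nu d) j j) = dim_row (info_mat (del_col Y j) nu d)"
    "dim_col (mat_delete (info_mat Y nu d) j j) = dim_col (info_mat (del_col Y j) nu d)"
    using info_mat_carrier[OF Y, of nu d] info_mat_carrier[OF Dc, of nu d] by auto
  fix r c assume r: "r < dim_row (info_mat (del_col Y j) nu d)" and c: "c < dim_col (info_mat (del_col Y j) nu d)"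
  hence r': "r < k - 1" and c': "c < k - 1" using info_mat_carrier[OF Dc, of nu d] by auto
  have "mat_delete (info_mat Y nu d) j j $$ (r,c) = info_mat Y nu d $$ (if r < j then r else Suc r, if c < j then c else Suc c)"
    using r' c' info_mat_carrier[OF Y, of nu d] by (auto simp: mat_delete_def)
  also have "\<dots> = (\<Sum>l<m. Y $$ (l, if r < j then r else Suc r) * (d l * nu l) * Y $$ (l, if c < j then c else Suc c))"
    by (rule info_mat_entry[OF Y]) (use r' c' in auto)
  also have "\<dots> = info_mat (del_col Y j) nu d $$ (r,c)"
    unfolding info_mat_entry[OF Dc r' c'] using r' c' Y by (intro sum.cong) (auto simp: del_col_def)
  finally show "mat_delete (info_mat Y nu d) j j $$ (r,c) = info_mat (del_col Y j) nu d $$ (r,c)" .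
qed

lemma hfun_eq:
  assumes X: "X \<in> carrier_mat m p"
  shows "hfun X nu w' = (if fdet X nu w' > 0 then fdet X nu w' / (\<Sum>j<p. fdet_minus X nu w' j) else 0)"
proof (cases "fdet X nu w' > 0")
  case False thus ?thesis unfolding hfun_def by simp
next
  case True
  define M where "M = info_mat X nu w'"
  define f where "f = det M"
  have fp: "f > 0" using True unfolding f_def M_def fdet_def .
  have Mc: "M \<in> carrier_mat p p" unfolding M_def by (rule info_mat_carrier[OF X])
  have "M \<in> Units (ring_mat TYPE(real) p ())"
    by (rule det_non_zero_imp_unit[OF Mc]) (use fp f_def in auto)
  then obtain Bi where Bi: "mat_inverse M = Some Bi"
    using mat_inverse(1)[OF Mc, where b="()"] by (cases "mat_inverse M") auto
  from mat_inverse(2)[OF Mc Bi] have MB: "M * Bi = 1\<^sub>m p" and Bc: "Bi \<in> carrier_mat p p" by auto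
  have adjc: "adj_mat M \<in> carrier_mat p p" by (rule adj_mat(1)[OF Mc])
  have "adj_mat M = adj_mat M * (M * Bi)" using MB adjc by simp
  also have "\<dots> = (adj_mat M * M) * Bi" using adjc Mc Bc by simp
  also have "\<dots> = f \<cdot>\<^sub>m Bi" using adj_mat(3)[OF Mc] Bc f_def by (simp add: mult_smult_assoc_mat[OF one_carrier_mat Bc])
  finally have adjB: "adj_mat M = f \<cdot>\<^sub>m Bi" .
  have Bdiag: "Bi $$ (c,c) = det (mat_delete M c c) / f" if c: "c < p" for c
  proof -
    have "adj_mat M $$ (c,c) = f * Bi $$ (c,c)" using adjB c Bc by simp
    moreover have "adj_mat M $$ (c,c) = det (mat_delete M c c)"
      using c Mc by (simp add: adj_mat_def cofactor_def)
    ultimately show ?thesis using fp by (simp add: field_simps)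
  qed
  have "mtrace Bi = (\<Sum>c<p. det (mat_delete M c c) / f)"
    unfolding mtrace_def using Bc Bdiag by (intro sum.cong) auto
  also have "\<dots> = (\<Sum>j<p. fdet_minus X nu w' j) / f"
    unfolding sum_divide_distrib fdet_minus_def fdet_def M_def
    using mat_delete_info[OF X] by simp
  finally have tr: "mtrace Bi = (\<Sum>j<p. fdet_minus X nu w' j) / f" .
  show ?thesis unfolding hfun_def using True Bi tr
    by (simp add: M_def f_def fdet_def)
qed

lemma wpath_split: "wpath w i x l = (1-x) * wpath w i 0 l + x * (if l = i then 1 else 0)"
  unfolding wpath_def by auto

lemma path_entry:
  assumes Y: "Y \<in> carrier_mat m k" and r: "r < k" and c: "c < k" and i: "i < m"
  shows "info_mat Y nu (wpath w i x) $$ (r,c) =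
    (1-x) * info_mat Y nu (wpath w i 0) $$ (r,c) + x * (nu i * Y$$(i,r) * Y$$(i,c))"
proof -
  have "info_mat Y nu (wpath w i x) $$ (r,c) = (\<Sum>l<m. Y $$ (l,r) * (wpath w i x l * nu l) * Y $$ (l,c))"
    by (rule info_mat_entry[OF Y r c])
  also have "\<dots> = (\<Sum>l<m. (1-x) * (Y $$ (l,r) * (wpath w i 0 l * nu l) * Y $$ (l,c)) +
      (if l = i then x * (nu i * Y$$(i,r) * Y$$(i,c)) else 0))"
    by (intro sum.cong refl) (auto simp: wpath_split[of w i x] algebra_simps)
  also have "\<dots> = (1-x) * info_mat Y nu (wpath w i 0) $$ (r,c) + x * (nu i * Y$$(i,r) * Y$$(i,c))"
    using i by (simp add: sum.distrib sum_distrib_left info_mat_entry[OF Y r c])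
  finally show ?thesis .
qed

definition alpha_of :: "real mat \<Rightarrow> (nat \<Rightarrow> real) \<Rightarrow> (nat \<Rightarrow> real) \<Rightarrow> nat \<Rightarrow> real" where
  "alpha_of Y nu w i = nu i * (\<Sum>r<dim_col Y. \<Sum>c<dim_col Y. Y$$(i,r) * Y$$(i,c) *
      cofactor (info_mat Y nu (wpath w i 0)) r c)"

lemma path_det:
  assumes Y: "Y \<in> carrier_mat m k" and k: "k \<ge> 1" and i: "i < m" and x: "x \<noteq> 1"
  shows "fdet Y nu (wpath w i x) = (1-x)^k * fdet Y nu (wpath w i 0) + x * (1-x)^(k-1) * alpha_of Y nu w i"
proof -
  define G where "G = info_mat Y nu (wpath w i 0)"
  have Gc: "G \<in> carrier_mat k k" unfolding G_def by (rule info_mat_carrier[OF Y])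
  define t where "t = x * nu i / (1-x)"
  define S where "S = (\<Sum>r<k. \<Sum>c<k. Y$$(i,r) * Y$$(i,c) * cofactor G r c)"
  have x1: "1 - x \<noteq> 0" using x by simp
  have Meq: "info_mat Y nu (wpath w i x) = (1-x) \<cdot>\<^sub>m mat k k (\<lambda>(r,c). G$$(r,c) + t * Y$$(i,r) * Y$$(i,c))"
  proof (rule eq_matI)
    fix r c assume "r < dim_row ((1-x) \<cdot>\<^sub>m mat k k (\<lambda>(r,c). G$$(r,c) + t * Y$$(i,r) * Y$$(i,c)))"
      "c < dim_col ((1-x) \<cdot>\<^sub>m mat k k (\<lambda>(r,c). G$$(r,c) + t * Y$$(i,r) * Y$$(i,c)))"
    hence r: "r < k" and c: "c < k" by auto
    show "info_mat Y nu (wpath w i x) $$ (r,c) = ((1-x) \<cdot>\<^sub>m mat k k (\<lambda>(r,c). G$$(r,c) + t * Y$$(i,r) * Y$$(i,c))) $$ (r,c)"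
      unfolding path_entry[OF Y r c i, where x=x] using r c x1 by (simp add: G_def t_def field_simps)
  qed (use info_mat_carrier[OF Y, of nu "wpath w i x"] in auto)
  have "fdet Y nu (wpath w i x) = (1-x)^k * det (mat k k (\<lambda>(r,c). G$$(r,c) + t * Y$$(i,r) * Y$$(i,c)))"
    unfolding fdet_def Meq by simp
  also have "det (mat k k (\<lambda>(r,c). G$$(r,c) + t * Y$$(i,r) * Y$$(i,c))) = det G + t * S"
    unfolding S_def using mdl[OF Gc, of t "\<lambda>r. Y$$(i,r)"] by simp
  also have "(1-x)^k * (det G + t * S) = (1-x)^k * det G + x * (1-x)^(k-1) * (nu i * S)"
  proof -
    obtain k' where k': "k = Suc k'" using k by (cases k) auto
    show ?thesis unfolding k' t_def using x1 by (simp add: field_simps)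
  qed
  finally show ?thesis unfolding alpha_of_def S_def G_def fdet_def using Y by simp
qed

lemma path_det1:
  assumes Y: "Y \<in> carrier_mat m k" and k: "k \<ge> 2" and i: "i < m"
  shows "fdet Y nu (wpath w i 1) = 0"
proof -
  have Meq: "info_mat Y nu (wpath w i 1) = mat k k (\<lambda>(r,c). (0\<^sub>m k k :: real mat)$$(r,c) + nu i * Y$$(i,r) * Y$$(i,c))"
  proof (rule eq_matI)
    fix r c assume "r < dim_row (mat k k (\<lambda>(r,c). (0\<^sub>m k k :: real mat)$$(r,c) + nu i * Y$$(i,r) * Y$$(i,c)))"
      "c < dim_col (mat k k (\<lambda>(r,c). (0\<^sub>m k k :: real mat)$$(r,c) + nu i * Y$$(i,r) * Y$$(i,c)))"
    hence r: "r < k" and c: "c < k" by auto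
    show "info_mat Y nu (wpath w i 1) $$ (r,c) = mat k k (\<lambda>(r,c). (0\<^sub>m k k :: real mat)$$(r,c) + nu i * Y$$(i,r) * Y$$(i,c)) $$ (r,c)"
      unfolding path_entry[OF Y r c i, where x=1] using r c by simp
  qed (use info_mat_carrier[OF Y, of nu "wpath w i 1"] in auto)
  have cof0: "cofactor (0\<^sub>m k k :: real mat) r c = 0" for r c
  proof -
    have "mat_delete (0\<^sub>m k k :: real mat) r c = 0\<^sub>m (k-1) (k-1)"
      by (rule eq_matI) (auto simp: mat_delete_def)
    moreover have "k - 1 > 0" using k by simp
    ultimately show ?thesis by (simp add: cofactor_def)
  qed
  have "det (0\<^sub>m k k :: real mat) = 0" using k by simp
  thus ?thesis unfolding fdet_def Meq
    using mdl[of "0\<^sub>m k k :: real mat" k "nu i" "\<lambda>r. Y$$(i,r)"] cof0 by simp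
qed

lemma qf_path:
  assumes Y: "Y \<in> carrier_mat m k" and i: "i < m"
  shows "(\<Sum>r<k. \<Sum>c<k. u r * info_mat Y nu (wpath w i x) $$ (r,c) * u c) =
    (1-x) * (\<Sum>r<k. \<Sum>c<k. u r * info_mat Y nu (wpath w i 0) $$ (r,c) * u c) + x * nu i * (\<Sum>r<k. Y$$(i,r) * u r)^2"
proof -
  have "(\<Sum>r<k. \<Sum>c<k. u r * info_mat Y nu (wpath w i x) $$ (r,c) * u c) =
      (\<Sum>r<k. \<Sum>c<k. (1-x) * (u r * info_mat Y nu (wpath w i 0) $$ (r,c) * u c) + x * nu i * ((Y$$(i,r) * u r) * (Y$$(i,c) * u c)))"
    by (intro sum.cong refl) (simp add: path_entry[OF Y _ _ i, where x=x] algebra_simps)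
  also have "\<dots> = (1-x) * (\<Sum>r<k. \<Sum>c<k. u r * info_mat Y nu (wpath w i 0) $$ (r,c) * u c) + x * nu i * (\<Sum>r<k. \<Sum>c<k. (Y$$(i,r) * u r) * (Y$$(i,c) * u c))"
    by (simp add: sum.distrib sum_distrib_left)
  also have "(\<Sum>r<k. \<Sum>c<k. (Y$$(i,r) * u r) * (Y$$(i,c) * u c)) = (\<Sum>r<k. Y$$(i,r) * u r)^2"
    by (simp add: power2_eq_square sum_product)
  finally show ?thesis .
qed

lemma const_lemma:
  fixes g :: "real \<Rightarrow> real"
  assumes k: "k \<ge> 1" and wi: "0 \<le> wi" "wi < 1"
  and g: "\<And>x. 0 \<le> x \<Longrightarrow> x < 1 \<Longrightarrow> g x = (1-x)^k * g 0 + x * (1-x)^(k-1) * al"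
  shows "(if wi = 0 then 2^k * g (1/2) - g 0 else (g wi - g 0 * (1-wi)^k) / (wi * (1-wi)^(k-1))) = al"
proof (cases "wi = 0")
  case True
  obtain k' where k': "k = Suc k'" using k by (cases k) auto
  have "g (1/2) = (1/2)^k * g 0 + (1/2) * (1/2)^(k-1) * al" using g[of "1/2"] by simp
  hence "2^k * g (1/2) = g 0 + al" unfolding k' by (simp add: field_simps)
  thus ?thesis using True by simp
next
  case False
  hence w0: "wi > 0" using wi by simp
  have "g wi - g 0 * (1-wi)^k = wi * (1-wi)^(k-1) * al" using g[of wi] wi by simp
  moreover have "wi * (1-wi)^(k-1) > 0" using w0 wi by simp
  ultimately show ?thesis using False wi by (simp add: field_simps)
qed

lemma pow_split:
  fixes y x be al :: real
  assumes "k \<ge> 1"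
  shows "y^k * be + x * y^(k-1) * al = y^(k-1) * (y*be + x*al)"
proof -
  obtain k' where k': "k = Suc k'" using assms by (cases k) auto
  show ?thesis unfolding k' by (simp add: distrib_left mult_ac)
qed

lemma nonneg_lemma:
  fixes be al :: real
  assumes k: "k \<ge> 1"
  and g: "\<And>x. 0 \<le> x \<Longrightarrow> x < 1 \<Longrightarrow> (1-x)^k * be + x * (1-x)^(k-1) * al \<ge> 0"
  shows "be \<ge> 0" "al \<ge> 0"
proof -
  show b: "be \<ge> 0" using g[of 0] by simp
  show "al \<ge> 0"
  proof (rule ccontr)
    assume "\<not> al \<ge> 0"
    hence a: "al < 0" by simp
    define e where "e = be - al"
    have e0: "e > 0" unfolding e_def using a b by simp
    define s where "s = - al / (2 * e)"
    have s0: "s > 0" unfolding s_def using a e0 by (intro divide_pos_pos) auto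
    have s1: "s \<le> 1/2" unfolding s_def using a b e0 by (simp add: field_simps e_def)
    define x where "x = 1 - s"
    have x: "0 \<le> x" "x < 1" unfolding x_def using s0 s1 by auto
    have eq1: "(1-x)^k * be + x * (1-x)^(k-1) * al = (1-x)^(k-1) * ((1-x)*be + x*al)"
      by (rule pow_split[OF k])
    have eq2: "(1-x)*be + x*al = al / 2"
    proof -
      have "(1-x)*be + x*al = al + s * e" unfolding x_def e_def by (simp add: algebra_simps)
      also have "s * e = - al / 2" unfolding s_def using e0 by (simp add: field_simps)
      finally show ?thesis by simp
    qed
    have pos: "(1-x)^(k-1) > 0" using x by simp
    have "(1-x)^(k-1) * (al / 2) < 0" using pos a by (intro mult_pos_neg) auto
    hence "(1-x)^k * be + x * (1-x)^(k-1) * al < 0" unfolding eq1 eq2 .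
    thus False using g[OF x] by linarith
  qed
qed

lemma sq_helper: "(e::real) > 0 \<Longrightarrow> E^2 / (4*e) = e * (E / (2*e))^2"
  by (simp add: power2_eq_square field_simps)

lemma case2_lemma:
  fixes a b B :: real and h :: "real \<Rightarrow> real"
  assumes B: "B > 0" and b: "b \<ge> 0" and a2b: "a > 2 * b"
  and h: "\<And>x. 0 \<le> x \<Longrightarrow> x \<le> 1 \<Longrightarrow> h x = (1-x)*((1-x)*b + x*a)/((1-x)*B + x*B)"
  shows "a^2 / (4 * (a - b) * B) > 0 \<and>
       0 < (a - 2 * b) / (2 * a - 2 * b) \<and> (a - 2 * b) / (2 * a - 2 * b) < 1 \<and>
       unique_max_on01 h ((a - 2 * b) / (2 * a - 2 * b)) (a^2 / (4 * (a - b) * B))"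
proof -
  define xs where "xs = (a - 2 * b) / (2 * a - 2 * b)"
  have d: "a - b > 0" using a2b b by linarith
  have a0: "a > 0" using a2b b by linarith
  have key: "a^2 / (4 * (a - b) * B) - h x = (a - b) * (x - xs)^2 / B" if x: "0 \<le> x" "x \<le> 1" for x
  proof -
    have "h x = (1-x)*((1-x)*b + x*a)/B" using h[OF x] by (simp add: algebra_simps)
    moreover have "a^2 / (4 * (a - b)) - (1-x)*((1-x)*b + x*a) = (a - b) * (x - xs)^2"
    proof -
      define Q where "Q = (1-x)*((1-x)*b + x*a)"
      have poly: "a^2 - 4*(a-b)*Q = (2*(a-b)*x - (a-2*b))^2"
        unfolding Q_def by (simp add: power2_eq_square algebra_simps)
      have xd: "x - xs = (2*(a-b)*x - (a-2*b)) / (2*(a-b))"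
        unfolding xs_def using d by (simp add: field_simps)
      have "a^2 / (4 * (a - b)) - Q = (a^2 - 4*(a-b)*Q) / (4*(a-b))"
        using d by (simp add: field_simps)
      also have "\<dots> = (2*(a-b)*x - (a-2*b))^2 / (4*(a-b))" by (simp only: poly)
      also have "\<dots> = (a - b) * (x - xs)^2"
      proof -
        define E where "E = 2*(a-b)*x - (a-2*b)"
        have "E^2 / (4*(a-b)) = (a - b) * (E / (2*(a-b)))^2"
          using sq_helper[of "a-b" E] d by simp
        thus ?thesis unfolding xd E_def .
      qed
      finally show ?thesis unfolding Q_def .
    qed
    ultimately show ?thesis
      by (metis diff_divide_distrib divide_divide_eq_left)
  qed
  have V: "a^2 / (4 * (a - b) * B) > 0" using a0 d B by simp
  have x0: "0 < xs" unfolding xs_def using a2b d by (simp add: field_simps)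
  have x1: "xs < 1" unfolding xs_def using a2b d b by (simp add: field_simps)
  have "unique_max_on01 h xs (a^2 / (4 * (a - b) * B))"
    unfolding unique_max_on01_def
  proof (intro conjI allI impI)
    show "0 \<le> xs" "xs \<le> 1" using x0 x1 by auto
    show "h xs = a^2 / (4 * (a - b) * B)" using key[of xs] x0 x1 by simp
    fix x assume "0 \<le> x \<and> x \<le> 1 \<and> x \<noteq> xs"
    hence x: "0 \<le> x" "x \<le> 1" "x \<noteq> xs" by auto
    have "(a - b) * (x - xs)^2 / B > 0" using d B x(3) by simp
    thus "h x < a^2 / (4 * (a - b) * B)" using key[OF x(1,2)] by linarith
  qed
  thus ?thesis using V x0 x1 unfolding xs_def by auto
qed

lemma convpos:
  fixes x A B :: real
  assumes "0 \<le> x" "x \<le> 1" "A > 0" "B > 0"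
  shows "(1-x)*B + x*A > 0"
proof (cases "x = 0")
  case True thus ?thesis using assms by simp
next
  case False
  hence "x*A > 0" using assms by simp
  moreover have "(1-x)*B \<ge> 0" using assms by simp
  ultimately show ?thesis by linarith
qed

lemma case1_key:
  fixes A B c d t ts P :: real
  assumes t: "t > 0" and AB: "A \<noteq> B" and Ac: "A*c = d*ts^2"
  and P: "P*(A-B)^2 = (A-t)*(d*t-c)"
  shows "(A*d + c - 2*d*ts)/(A-B)^2 - P/t = d*(t-ts)^2/((A-B)^2*t)"
proof -
  have AB2: "(A-B)^2 > 0" using AB by simp
  have P': "P = (A-t)*(d*t-c)/(A-B)^2" using P AB2 by (simp add: field_simps)
  have N1: "(A*d + c - 2*d*ts)*t - (A-t)*(d*t-c) = d*(t-ts)^2"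
  proof -
    have "(A*d + c - 2*d*ts)*t - (A-t)*(d*t-c) = d*t^2 - 2*d*ts*t + A*c"
      by (simp add: algebra_simps power2_eq_square)
    also have "\<dots> = d*(t-ts)^2" unfolding Ac by (simp add: algebra_simps power2_eq_square)
    finally show ?thesis .
  qed
  have "(A*d + c - 2*d*ts)/(A-B)^2 - P/t = ((A*d + c - 2*d*ts)*t - (A-t)*(d*t-c))/((A-B)^2*t)"
    unfolding P' using AB2 t by (simp add: field_simps)
  also have "\<dots> = d*(t-ts)^2/((A-B)^2*t)" unfolding N1 ..
  finally show ?thesis .
qed

lemma case1_lemma:
  fixes a b A B :: real and h :: "real \<Rightarrow> real"
  assumes hyp: "A \<noteq> B" "A > 0" "B > 0" "a > b" "a*B > b*A" "b*A < (a-b)*B" and b: "b \<ge> 0"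
  and h: "\<And>x. 0 \<le> x \<Longrightarrow> x \<le> 1 \<Longrightarrow> h x = (1-x)*((1-x)*b + x*a)/((1-x)*B + x*A)"
  shows "let ts = sqrt (A * (a * B - b * A) / (a - b)) in
        min A B < ts \<and> ts < max A B \<and>
        0 < (ts - B) / (A - B) \<and> (ts - B) / (A - B) < 1 \<and>
        unique_max_on01 h ((ts - B) / (A - B))
          (((sqrt (A * (a - b)) - sqrt (a * B - b * A)) / (A - B))^2)"
proof -
  define c where "c = a*B - b*A"
  define d where "d = a - b"
  define ts where "ts = sqrt (A * c / d)"
  have c0: "c > 0" and d0: "d > 0" using hyp unfolding c_def d_def by auto
  have ts0: "ts > 0" unfolding ts_def using c0 d0 hyp by simp
  have tsq: "ts^2 = A*c/d" unfolding ts_def using c0 d0 hyp by simp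
  have Ac: "A*c = d*ts^2" using tsq d0 by (simp add: field_simps)
  have iden: "A*c - B^2*d = (A-B)*(d*B - b*A)" unfolding c_def d_def by (simp add: algebra_simps power2_eq_square)
  have dBbA: "d*B - b*A > 0" using hyp unfolding d_def by simp
  have a0: "a > 0" using hyp b by linarith
  have lt_iff: "x < y" if "x^2 < y^2" "0 \<le> y" for x y :: real
    using power_less_imp_less_base[OF that] .
  have between: "min A B < ts \<and> ts < max A B"
  proof (cases "A > B")
    case True
    have "ts^2 < A^2"
    proof -
      have "a*B < a*A" using True a0 by simp
      hence "c < A*d" unfolding c_def d_def by (simp add: algebra_simps)
      hence "A*c < A*(A*d)" using hyp by simp
      hence "d * ts^2 < d * A^2" using Ac by (simp add: power2_eq_square mult_ac)
      thus ?thesis using d0 by simp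
    qed
    hence "ts < A" using lt_iff hyp by auto
    moreover have "B^2 < ts^2"
    proof -
      have "B^2*d < A*c" using iden True dBbA by (smt (verit) mult_pos_pos)
      hence "d*B^2 < d*ts^2" using Ac by (simp add: mult.commute)
      thus ?thesis using d0 by simp
    qed
    hence "B < ts" using lt_iff ts0 by auto
    ultimately show ?thesis using True by auto
  next
    case False
    hence AB: "A < B" using hyp by auto
    have "A^2 < ts^2"
    proof -
      have "a*A < a*B" using AB a0 by simp
      hence "A*d < c" unfolding c_def d_def by (simp add: algebra_simps)
      hence "A*(A*d) < A*c" using hyp by simp
      hence "d*A^2 < d*ts^2" using Ac by (simp add: power2_eq_square mult_ac)
      thus ?thesis using d0 by simp
    qed
    hence "A < ts" using lt_iff ts0 by auto
    moreover have "ts^2 < B^2"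
    proof -
      have "(A - B) * (d * B - b * A) < 0" using AB dBbA by (simp add: mult_neg_pos)
      hence "A*c < B^2*d" using iden by linarith
      hence "d*ts^2 < d*B^2" using Ac by (simp add: mult.commute)
      thus ?thesis using d0 by simp
    qed
    hence "ts < B" using lt_iff hyp by auto
    ultimately show ?thesis using AB by auto
  qed
  define xs where "xs = (ts - B) / (A - B)"
  have xs01: "0 < xs \<and> xs < 1"
  proof (cases "A > B")
    case True thus ?thesis using between unfolding xs_def by (simp add: field_simps)
  next
    case False hence "A < B" using hyp by auto
    thus ?thesis using between unfolding xs_def by (simp add: field_simps)
  qed
  have txs: "(1-xs)*B + xs*A = ts"
  proof -
    have "xs*(A-B) = ts - B" unfolding xs_def using hyp(1) by simp
    moreover have "(1-xs)*B + xs*A = B + xs*(A-B)" by (simp add: algebra_simps)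
    ultimately show ?thesis by simp
  qed
  have s12: "sqrt (A*d) * sqrt c = d * ts"
  proof -
    have "d * ts = sqrt ((d*ts)^2)" using d0 ts0 by simp
    also have "(d*ts)^2 = A*d*c" using tsq d0 by (simp add: power_mult_distrib field_simps power2_eq_square)
    finally show ?thesis by (simp add: real_sqrt_mult)
  qed
  have V: "((sqrt (A * d) - sqrt c) / (A - B))^2 = (A*d + c - 2*d*ts)/(A-B)^2"
  proof -
    have "(sqrt (A * d) - sqrt c)^2 = A*d + c - 2*d*ts"
      using s12 hyp d0 c0 by (simp add: power2_diff)
    thus ?thesis by (simp add: power_divide)
  qed
  have key: "((sqrt (A * d) - sqrt c) / (A - B))^2 - h x = d*(((1-x)*B + x*A) - ts)^2/((A-B)^2*((1-x)*B + x*A))"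
    if x: "0 \<le> x" "x \<le> 1" for x
  proof -
    define t where "t = (1-x)*B + x*A"
    have t0: "t > 0" unfolding t_def using convpos x hyp by simp
    define P where "P = (1-x)*((1-x)*b + x*a)"
    have hx: "h x = P / t" unfolding P_def t_def using h[OF x] .
    have Pe: "P*(A-B)^2 = (A-t)*(d*t-c)"
      unfolding P_def t_def c_def d_def by (simp add: algebra_simps power2_eq_square)
    show ?thesis unfolding V hx t_def[symmetric]
      by (rule case1_key[OF t0 hyp(1) Ac Pe])
  qed
  have um: "unique_max_on01 h xs (((sqrt (A * d) - sqrt c) / (A - B))^2)"
    unfolding unique_max_on01_def
  proof (intro conjI allI impI)
    show "0 \<le> xs" "xs \<le> 1" using xs01 by auto
    show "h xs = ((sqrt (A * d) - sqrt c) / (A - B))^2"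
      using key[of xs] xs01 txs by simp
    fix x assume "0 \<le> x \<and> x \<le> 1 \<and> x \<noteq> xs"
    hence x: "0 \<le> x" "x \<le> 1" "x \<noteq> xs" by auto
    have t0: "(1-x)*B + x*A > 0" using convpos x hyp by simp
    have "(1-x)*B + x*A \<noteq> ts"
    proof
      assume "(1-x)*B + x*A = ts"
      hence "x = xs" unfolding xs_def using hyp(1) by (simp add: field_simps)
      thus False using x by simp
    qed
    hence "d*(((1-x)*B + x*A) - ts)^2/((A-B)^2*((1-x)*B + x*A)) > 0"
      using d0 t0 hyp(1) by (intro divide_pos_pos mult_pos_pos) auto
    thus "h x < ((sqrt (A * d) - sqrt c) / (A - B))^2" using key[OF x(1,2)] by linarith
  qed
  show ?thesis unfolding Let_def using between xs01 um
    unfolding ts_def xs_def c_def d_def by auto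
qed

lemma case4_lemma:
  fixes a b A B :: real and h :: "real \<Rightarrow> real"
  assumes nn: "a \<ge> 0" "b \<ge> 0" "A \<ge> 0" "B > 0" and A0: "A = 0 \<Longrightarrow> a = 0" and ab: "a > 0 \<or> b > 0"
  and h: "\<And>x. 0 \<le> x \<Longrightarrow> x \<le> 1 \<Longrightarrow> h x = (1-x)*((1-x)*b + x*a)/((1-x)*B + x*A)"
  and n1: "\<not> (A \<noteq> B \<and> A > 0 \<and> B > 0 \<and> a > b \<and> a * B > b * A \<and> b * A < (a - b) * B)"
  and n2: "\<not> (A = B \<and> a > 2 * b)"
  shows "b / B > 0 \<and> unique_max_on01 h 0 (b / B)"
proof -
  have b0: "b > 0"
  proof (rule ccontr)
    assume "\<not> b > 0"
    hence b: "b = 0" using nn by simp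
    hence a: "a > 0" using ab by simp
    hence A: "A > 0" using A0 nn by force
    show False
    proof (cases "A = B")
      case True thus False using n2 a b by simp
    next
      case False thus False using n1 a b A nn by simp
    qed
  qed
  have phi: "b*A - (a-b)*B*(1-x) > 0" if x: "0 < x" "x < 1" for x
  proof (cases "a < b")
    case True
    have "(b-a)*B*(1-x) > 0" using True nn x by simp
    moreover have "b*A \<ge> 0" using nn by simp
    ultimately show ?thesis by (simp add: algebra_simps)
  next
    case False
    show ?thesis
    proof (cases "a = b")
      case True
      hence "A > 0" using A0 b0 nn by force
      thus ?thesis using True b0 by simp
    next
      case False
      hence ab': "a > b" using \<open>\<not> a < b\<close> by simp
      hence A: "A > 0" using A0 nn by force
      have pos: "(a-b)*B*x > 0" using ab' nn x by simp
      have e: "b*A - (a-b)*B*(1-x) = (b*A - (a-b)*B) + (a-b)*B*x" by (simp add: algebra_simps)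
      show ?thesis
      proof (cases "A = B")
        case True
        hence "a \<le> 2*b" using n2 by simp
        hence "b*A - (a-b)*B \<ge> 0" using True nn by (simp add: algebra_simps mult_right_mono)
        thus ?thesis using e pos by linarith
      next
        case AB: False
        have "\<not> a * B > b * A \<or> \<not> b * A < (a - b) * B" using n1 AB A nn ab' by simp
        hence "b*A - (a-b)*B \<ge> 0"
        proof (elim disjE)
          assume "\<not> a * B > b * A"
          hence "b*A - (a-b)*B \<ge> b*B" by (simp add: algebra_simps)
          moreover have "b*B \<ge> 0" using nn by simp
          ultimately show "b*A - (a-b)*B \<ge> 0" by linarith
        next
          assume "\<not> b * A < (a - b) * B"
          thus "b*A - (a-b)*B \<ge> 0" by simp
        qed
        thus ?thesis using e pos by linarith
      qed
    qed
  qed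
  have h0: "h 0 = b / B" using h[of 0] by simp
  have um: "unique_max_on01 h 0 (b / B)"
    unfolding unique_max_on01_def
  proof (intro conjI allI impI)
    show "(0::real) \<le> 0" "(0::real) \<le> 1" by auto
    show "h 0 = b / B" by (rule h0)
    fix x :: real assume "0 \<le> x \<and> x \<le> 1 \<and> x \<noteq> 0"
    hence x: "0 < x" "x \<le> 1" by auto
    show "h x < b / B"
    proof (cases "x = 1")
      case True
      thus ?thesis using h[of 1] b0 nn by simp
    next
      case False
      hence x1: "x < 1" using x by simp
      define t where "t = (1-x)*B + x*A"
      define P where "P = (1-x)*((1-x)*b + x*a)"
      have t0: "t > 0" unfolding t_def
      proof -
        have "(1-x)*B > 0" using x1 nn by simp
        moreover have "x*A \<ge> 0" using x nn by simp
        ultimately show "(1-x)*B + x*A > 0" by linarith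
      qed
      have hx: "h x = P / t" unfolding P_def t_def using h[of x] x by simp
      have iden: "b*t - B*P = x*(b*A - (a-b)*B*(1-x))"
        unfolding t_def P_def by (simp add: algebra_simps)
      have "b*t - B*P > 0" unfolding iden using phi[OF x(1) x1] x by simp
      hence "B*P < b*t" by simp
      thus ?thesis unfolding hx using t0 nn by (simp add: field_simps mult.commute)
    qed
  qed
  show ?thesis using b0 nn um by simp
qed

lemma oned:
  fixes a b A B :: real and h :: "real \<Rightarrow> real"
  assumes nn: "a \<ge> 0" "b \<ge> 0" "A \<ge> 0" "B > 0" and A0: "A = 0 \<Longrightarrow> a = 0" and ab: "a > 0 \<or> b > 0"
  and h: "\<And>x. 0 \<le> x \<Longrightarrow> x \<le> 1 \<Longrightarrow> h x = (1-x)*((1-x)*b + x*a)/((1-x)*B + x*A)"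
  shows
    "(A \<noteq> B \<and> A > 0 \<and> B > 0 \<and> a > b \<and> a * B > b * A \<and> b * A < (a - b) * B \<longrightarrow>
       (let ts = sqrt (A * (a * B - b * A) / (a - b)) in
        min A B < ts \<and> ts < max A B \<and>
        0 < (ts - B) / (A - B) \<and> (ts - B) / (A - B) < 1 \<and>
        unique_max_on01 h ((ts - B) / (A - B))
          (((sqrt (A * (a - b)) - sqrt (a * B - b * A)) / (A - B))^2)))
   \<and> (A = B \<and> a > 2 * b \<longrightarrow>
       a^2 / (4 * (a - b) * B) > 0 \<and>
       0 < (a - 2 * b) / (2 * a - 2 * b) \<and> (a - 2 * b) / (2 * a - 2 * b) < 1 \<and>
       unique_max_on01 h ((a - 2 * b) / (2 * a - 2 * b)) (a^2 / (4 * (a - b) * B)))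
   \<and> (A \<noteq> B \<and> B = 0 \<and> b = 0 \<longrightarrow>
       a / A > 0 \<and> unique_max_on01 h 0 (a / A))
   \<and> (\<not> (A \<noteq> B \<and> A > 0 \<and> B > 0 \<and> a > b \<and> a * B > b * A \<and> b * A < (a - b) * B)
      \<and> \<not> (A = B \<and> a > 2 * b) \<and> \<not> (A \<noteq> B \<and> B = 0 \<and> b = 0) \<longrightarrow>
       b / B > 0 \<and> unique_max_on01 h 0 (b / B))"
proof (intro conjI impI)
  assume c1: "A \<noteq> B \<and> A > 0 \<and> B > 0 \<and> a > b \<and> a * B > b * A \<and> b * A < (a - b) * B"
  show "let ts = sqrt (A * (a * B - b * A) / (a - b)) in
        min A B < ts \<and> ts < max A B \<and>
        0 < (ts - B) / (A - B) \<and> (ts - B) / (A - B) < 1 \<and>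
        unique_max_on01 h ((ts - B) / (A - B))
          (((sqrt (A * (a - b)) - sqrt (a * B - b * A)) / (A - B))^2)"
    using case1_lemma[of A B b a h] c1 nn h by blast
next
  assume c2: "A = B \<and> a > 2 * b"
  have h2: "\<And>x. 0 \<le> x \<Longrightarrow> x \<le> 1 \<Longrightarrow> h x = (1-x)*((1-x)*b + x*a)/((1-x)*B + x*B)"
    using h c2 by simp
  show "a^2 / (4 * (a - b) * B) > 0" "0 < (a - 2 * b) / (2 * a - 2 * b)" "(a - 2 * b) / (2 * a - 2 * b) < 1"
     "unique_max_on01 h ((a - 2 * b) / (2 * a - 2 * b)) (a^2 / (4 * (a - b) * B))"
    using case2_lemma[of B b a h, OF nn(4) nn(2) _ h2] c2 by auto
next
  assume "A \<noteq> B \<and> B = 0 \<and> b = 0"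
  thus "a / A > 0" "unique_max_on01 h 0 (a / A)" using nn by auto
next
  assume c4: "\<not> (A \<noteq> B \<and> A > 0 \<and> B > 0 \<and> a > b \<and> a * B > b * A \<and> b * A < (a - b) * B)
      \<and> \<not> (A = B \<and> a > 2 * b) \<and> \<not> (A \<noteq> B \<and> B = 0 \<and> b = 0)"
  show "b / B > 0" "unique_max_on01 h 0 (b / B)"
    using case4_lemma[of a b A B h, OF nn A0 ab h] c4 by auto
qed

lemma small_x:
  fixes P K :: real
  assumes P: "P > 0" and K: "K \<ge> 0" and h: "\<And>x. 0 < x \<Longrightarrow> x < 1 \<Longrightarrow> (1-x)*P \<le> K*x"
  shows False
proof -
  define x where "x = min (1/2) (P/(4*(K+1)))"
  have x0: "x > 0" unfolding x_def using P K by simp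
  have x1: "x \<le> 1/2" unfolding x_def by (rule min.cobounded1)
  have "P*x \<le> P*(1/2)" using x1 P by (intro mult_left_mono) auto
  hence "(1-x)*P \<ge> P/2" by (simp add: algebra_simps)
  moreover have "K*x \<le> P/4"
  proof -
    have "K*x \<le> K*(P/(4*(K+1)))" unfolding x_def using K by (intro mult_left_mono) auto
    also have "\<dots> \<le> P/4" using K P by (simp add: field_simps)
    finally show ?thesis .
  qed
  moreover have "(1-x)*P \<le> K*x" using h x0 x1 by simp
  ultimately show False using P by linarith
qed

lemma near1:
  fixes P K :: real
  assumes P: "P > 0" and K: "K \<ge> 0" and h: "\<And>x. 0 < x \<Longrightarrow> x < 1 \<Longrightarrow> x*P \<le> K*(1-x)"
  shows False
proof (rule small_x[OF P K])
  fix y :: real assume "0 < y" "y < 1"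
  thus "(1-y)*P \<le> K*y" using h[of "1-y"] by simp
qed

lemma sum_two:
  fixes A B :: real and p :: nat
  assumes p: "p \<ge> 2"
  shows "(\<Sum>r<p. (if r = 0 then A else if r = 1 then B else 0)) = A + B"
proof -
  have "(\<Sum>r<p. (if r = 0 then A else if r = 1 then B else 0)) =
      (\<Sum>r<p. (if r = 0 then A else 0) + (if r = 1 then B else 0))"
    by (intro sum.cong) auto
  also have "\<dots> = (\<Sum>r<p. (if r = 0 then A else 0)) + (\<Sum>r<p. (if r = 1 then B else 0))"
    by (rule sum.distrib)
  also have "(\<Sum>r<p. (if r = 0 then A else 0)) = A" using p by simp
  also have "(\<Sum>r<p. (if r = 1 then B else 0)) = B" using p by simp
  finally show ?thesis .
qed

lemma perp_exists:
  fixes c :: "nat \<Rightarrow> real" and p :: nat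
  assumes p: "p \<ge> 2"
  shows "\<exists>u. (\<Sum>r<p. c r * u r) = 0 \<and> (\<Sum>r<p. u r * u r) > 0"
proof (cases "c 0 = 0 \<and> c 1 = 0")
  case True
  define u :: "nat \<Rightarrow> real" where "u r = (if r = 0 then 1 else 0)" for r
  have "(\<Sum>r<p. c r * u r) = (\<Sum>r<p. if r = 0 then c 0 else 0)" by (intro sum.cong) (auto simp: u_def)
  also have "\<dots> = 0" using True by simp
  finally have 1: "(\<Sum>r<p. c r * u r) = 0" .
  have "(\<Sum>r<p. u r * u r) = (\<Sum>r<p. if r = 0 then 1 else 0)" by (intro sum.cong) (auto simp: u_def)
  also have "\<dots> = 1" using p by simp
  finally show ?thesis using 1 by auto
next
  case False
  define u :: "nat \<Rightarrow> real" where "u r = (if r = 0 then c 1 else if r = 1 then - c 0 else 0)" for r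
  have "(\<Sum>r<p. c r * u r) = (\<Sum>r<p. (if r = 0 then c 0 * c 1 else if r = 1 then - (c 1 * c 0) else 0))"
    by (intro sum.cong) (auto simp: u_def)
  also have "\<dots> = 0" using sum_two[OF p] by simp
  finally have 1: "(\<Sum>r<p. c r * u r) = 0" .
  have "(\<Sum>r<p. u r * u r) = (\<Sum>r<p. (if r = 0 then c 1 * c 1 else if r = 1 then c 0 * c 0 else 0))"
    by (intro sum.cong) (auto simp: u_def)
  also have "\<dots> = c 1 * c 1 + c 0 * c 0" using sum_two[OF p] by simp
  also have "\<dots> > 0"
  proof -
    have "c 1 * c 1 \<ge> 0" "c 0 * c 0 \<ge> 0" by auto
    moreover have "c 1 * c 1 > 0 \<or> c 0 * c 0 > 0" using False by (auto simp: zero_less_mult_iff linorder_neq_iff)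
    ultimately show ?thesis by linarith
  qed
  finally show ?thesis using 1 by auto
qed

lemma rayleigh_D:
  assumes Y: "Y \<in> carrier_mat m k" and k: "k \<ge> 1" and nn: "\<forall>l<m. d l * nu l \<ge> 0"
  and fpos: "det (info_mat Y nu d) > 0"
  shows "(\<Sum>j<k. det (mat_delete (info_mat Y nu d) j j)) > 0"
proof -
  define u :: "nat \<Rightarrow> real" where "u r = (if r = 0 then 1 else 0)" for r
  have U: "(\<Sum>r<k. u r * u r) = 1" using k by (simp add: u_def if_distrib cong: if_cong)
  have "det (info_mat Y nu d) * 1 \<le> (\<Sum>r<k. \<Sum>c<k. u r * info_mat Y nu d $$ (r,c) * u c) * (\<Sum>j<k. det (mat_delete (info_mat Y nu d) j j))"
    using rayleigh[OF Y nn fpos, of u] U by simp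
  moreover have "(\<Sum>r<k. \<Sum>c<k. u r * info_mat Y nu d $$ (r,c) * u c) \<ge> 0" by (rule gram_psd[OF Y nn])
  ultimately show ?thesis using fpos
  proof -
    assume a1: "det (info_mat Y nu d) * 1 \<le> (\<Sum>r<k. \<Sum>c<k. u r * info_mat Y nu d $$ (r,c) * u c) * (\<Sum>j<k. det (mat_delete (info_mat Y nu d) j j))"
      and a2: "(\<Sum>r<k. \<Sum>c<k. u r * info_mat Y nu d $$ (r,c) * u c) \<ge> 0"
    show ?thesis
    proof (rule ccontr)
      assume "\<not> ?thesis"
      hence "(\<Sum>r<k. \<Sum>c<k. u r * info_mat Y nu d $$ (r,c) * u c) * (\<Sum>j<k. det (mat_delete (info_mat Y nu d) j j)) \<le> 0"
        using a2 by (intro mult_nonneg_nonpos) auto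
      thus False using a1 fpos by simp
    qed
  qed
qed

theorem theorem2:
  fixes X :: "real mat" and nu w :: "nat \<Rightarrow> real" and m p i :: nat
  assumes X: "X \<in> carrier_mat m p"
    and mp: "m > p" and p2: "p \<ge> 2"
    and nu: "\<forall>l<m. nu l \<ge> 0"
    and w: "\<forall>l<m. 0 \<le> w l \<and> w l < 1"
    and wsum: "(\<Sum>l<m. w l) = 1"
    and fpos: "fdet X nu w > 0"
    and i: "i < m"
  defines "a \<equiv> a_const X nu w i" and "b \<equiv> b_const X nu w i"
    and "A \<equiv> A_const X nu w i" and "B \<equiv> B_const X nu w i"
    and "hi \<equiv> (\<lambda>x. hfun X nu (wpath w i x))"
  shows
    "(A \<noteq> B \<and> A > 0 \<and> B > 0 \<and> a > b \<and> a * B > b * A \<and> b * A < (a - b) * B \<longrightarrow>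
       (let ts = sqrt (A * (a * B - b * A) / (a - b)) in
        min A B < ts \<and> ts < max A B \<and>
        0 < (ts - B) / (A - B) \<and> (ts - B) / (A - B) < 1 \<and>
        unique_max_on01 hi ((ts - B) / (A - B))
          (((sqrt (A * (a - b)) - sqrt (a * B - b * A)) / (A - B))^2)))
   \<and> (A = B \<and> a > 2 * b \<longrightarrow>
       a^2 / (4 * (a - b) * B) > 0 \<and>
       0 < (a - 2 * b) / (2 * a - 2 * b) \<and> (a - 2 * b) / (2 * a - 2 * b) < 1 \<and>
       unique_max_on01 hi ((a - 2 * b) / (2 * a - 2 * b)) (a^2 / (4 * (a - b) * B)))
   \<and> (A \<noteq> B \<and> B = 0 \<and> b = 0 \<longrightarrow>
       a / A > 0 \<and> unique_max_on01 hi 0 (a / A))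
   \<and> (\<not> (A \<noteq> B \<and> A > 0 \<and> B > 0 \<and> a > b \<and> a * B > b * A \<and> b * A < (a - b) * B)
      \<and> \<not> (A = B \<and> a > 2 * b) \<and> \<not> (A \<noteq> B \<and> B = 0 \<and> b = 0) \<longrightarrow>
       b / B > 0 \<and> unique_max_on01 hi 0 (b / B))"
proof -
  have p1: "p \<ge> 1" using p2 by simp
  obtain q where pq: "p = Suc (Suc q)" using p2 by (metis add_2_eq_Suc le_Suc_ex)
  have wi: "0 \<le> w i" "w i < 1" using w i by auto
  have nui: "nu i \<ge> 0" using nu i by auto
  have dcX: "dim_col X = p" using X by simp
  define g where "g x = fdet X nu (wpath w i x)" for x
  define gj where "gj j x = fdet_minus X nu (wpath w i x) j" for j x
  define al where "al = alpha_of X nu w i"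
  define alj where "alj j = alpha_of (del_col X j) nu w i" for j
  have Dc: "del_col X j \<in> carrier_mat m (p-1)" for j by (rule del_col_carrier[OF X])
  have gform: "g x = (1-x)^p * g 0 + x*(1-x)^(p-1)*al" if "0 \<le> x" "x < 1" for x
    unfolding g_def al_def using path_det[OF X p1 i, where x=x and nu=nu and w=w] that by simp
  have gjform: "gj j x = (1-x)^(p-1) * gj j 0 + x*(1-x)^(p-2)*alj j" if "0 \<le> x" "x < 1" for j x
  proof -
    have "p - 1 \<ge> 1" using p2 by simp
    from path_det[OF Dc this i, where x=x and nu=nu and w=w] that
    show ?thesis unfolding gj_def alj_def fdet_minus_def by (simp add: pq)
  qed
  have g1: "g 1 = 0" unfolding g_def by (rule path_det1[OF X p2 i])
  have wnn: "\<forall>l<m. wpath w i x l * nu l \<ge> 0" if "0 \<le> x" "x \<le> 1" for x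
  proof (intro allI impI)
    fix l assume l: "l < m"
    have "wpath w i x l \<ge> 0" unfolding wpath_def using that wi w l by auto
    thus "wpath w i x l * nu l \<ge> 0" using nu l by simp
  qed
  have gnn: "g x \<ge> 0" if "0 \<le> x" "x \<le> 1" for x
    unfolding g_def fdet_def by (rule gram_det_nonneg[OF X wnn[OF that]])
  have gjnn: "gj j x \<ge> 0" if "0 \<le> x" "x \<le> 1" for j x
    unfolding gj_def fdet_minus_def fdet_def by (rule gram_det_nonneg[OF Dc wnn[OF that]])
  have wfix: "wpath w i (w i) = w"
    using wi unfolding wpath_def by (intro ext) auto
  have w0fix: "wpath w i 0 = w" if "w i = 0"
    using that unfolding wpath_def by (intro ext) auto
  have bdef: "b = g 0" unfolding b_def b_const_def g_def using w0fix by auto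
  have fw: "fdet X nu w = g (w i)" unfolding g_def wfix ..
  have adef: "a = al"
  proof -
    have "a = (if w i = 0 then 2 ^ p * g (1/2) - g 0 else (g (w i) - g 0 * (1 - w i) ^ p) / (w i * (1 - w i) ^ (p - 1)))"
      unfolding a_def a_const_def Let_def dcX bdef[unfolded b_def] fw by (simp add: g_def)
    also have "\<dots> = al" by (rule const_lemma[OF p1 wi gform])
    finally show ?thesis .
  qed
  have bjdef: "bj_const X nu w i j = gj j 0" for j
    unfolding bj_const_def gj_def using w0fix by auto
  have ajdef: "aj_const X nu w i j = alj j" for j
  proof -
    have fwj: "fdet_minus X nu w j = gj j (w i)" unfolding gj_def wfix ..
    have k1: "p - 1 \<ge> 1" using p2 by simp
    have gjf: "gj j x = (1-x)^(p-1) * gj j 0 + x*(1-x)^(p-1-1)*alj j" if "0 \<le> x" "x < 1" for x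
      using gjform[OF that] by (simp add: pq)
    have "aj_const X nu w i j = (if w i = 0 then 2 ^ (p-1) * gj j (1/2) - gj j 0 else (gj j (w i) - gj j 0 * (1 - w i) ^ (p-1)) / (w i * (1 - w i) ^ (p - 1 - 1)))"
      unfolding aj_const_def Let_def dcX bjdef fwj by (simp add: gj_def pq)
    also have "\<dots> = alj j" by (rule const_lemma[OF k1 wi gjf])
    finally show ?thesis .
  qed
  have Bdef: "B = (\<Sum>j<p. gj j 0)" unfolding B_def B_const_def dcX bjdef ..
  have Adef: "A = (\<Sum>j<p. alj j)" unfolding A_def A_const_def dcX ajdef ..
  have gnn': "(1-x)^p * g 0 + x*(1-x)^(p-1)*al \<ge> 0" if "0 \<le> x" "x < 1" for x
    using gnn[of x] gform[OF that] that by simp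
  have b0: "b \<ge> 0" and a0: "a \<ge> 0" using nonneg_lemma[OF p1 gnn'] bdef adef by auto
  have ajnn: "gj j 0 \<ge> 0 \<and> alj j \<ge> 0" for j
  proof -
    have k1: "p - 1 \<ge> 1" using p2 by simp
    have "(1-x)^(p-1) * gj j 0 + x*(1-x)^(p-1-1)*alj j \<ge> 0" if "0 \<le> x" "x < 1" for x
      using gjnn[of x j] gjform[OF that, of j] that by (simp add: pq)
    from nonneg_lemma[OF k1 this] show ?thesis by auto
  qed
  have B0: "B \<ge> 0" unfolding Bdef using ajnn by (intro sum_nonneg) auto
  have A0: "A \<ge> 0" unfolding Adef using ajnn by (intro sum_nonneg) auto
  define D where "D x = (\<Sum>j<p. gj j x)" for x
  define N where "N x = (1-x)*b + x*a" for x
  define Dn where "Dn x = (1-x)*B + x*A" for x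
  have gN: "g x = (1-x)^(p-1) * N x" if "0 \<le> x" "x < 1" for x
    unfolding gform[OF that] N_def bdef adef by (rule pow_split[OF p1])
  have DDn: "D x = (1-x)^(p-2) * Dn x" if "0 \<le> x" "x < 1" for x
  proof -
    have "D x = (\<Sum>j<p. (1-x)^(p-1) * gj j 0 + x*(1-x)^(p-2) * alj j)"
      unfolding D_def using gjform[OF that] by simp
    also have "\<dots> = (1-x)^(p-1) * (\<Sum>j<p. gj j 0) + x*(1-x)^(p-2) * (\<Sum>j<p. alj j)"
      by (simp add: sum.distrib sum_distrib_left)
    finally have "D x = (1-x)^(p-1) * B + x*(1-x)^(p-2)*A" unfolding Bdef Adef .
    also have "\<dots> = (1-x)^(p-2) * Dn x" unfolding Dn_def pq by (simp add: algebra_simps)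
    finally show ?thesis .
  qed
  have hform0: "hi x = (if g x > 0 then g x / D x else 0)" for x
    unfolding hi_def g_def D_def gj_def by (rule hfun_eq[OF X])
  have Dpos: "D x > 0" if "0 \<le> x" "x \<le> 1" "g x > 0" for x
  proof -
    have "(\<Sum>j<p. det (mat_delete (info_mat X nu (wpath w i x)) j j)) > 0"
      by (rule rayleigh_D[OF X p1 wnn[OF that(1,2)]]) (use that(3) in \<open>simp add: g_def fdet_def\<close>)
    thus ?thesis unfolding D_def gj_def fdet_minus_def fdet_def using mat_delete_info[OF X] by simp
  qed
  have NDn: "Dn x > 0" if "0 \<le> x" "x < 1" "N x > 0" for x
  proof -
    have "(1-x)^(p-1) > 0" using that by simp
    hence "g x > 0" using gN[OF that(1,2)] that(3) by simp
    hence "D x > 0" using Dpos that by simp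
    thus ?thesis using DDn[OF that(1,2)] that
      by (simp add: zero_less_mult_iff)
  qed
  have hform: "hi x = (1-x)*((1-x)*b + x*a)/((1-x)*B + x*A)" if x: "0 \<le> x" "x \<le> 1" for x
  proof (cases "x = 1")
    case True thus ?thesis using hform0[of 1] g1 by simp
  next
    case False
    hence x1: "x < 1" using x by simp
    have pos: "(1-x)^(p-2) > 0" using x1 by simp
    show ?thesis
    proof (cases "g x > 0")
      case True
      have "hi x = g x / D x" using hform0 True by simp
      also have "\<dots> = ((1-x)^(p-2) * ((1-x) * N x)) / ((1-x)^(p-2) * Dn x)"
        unfolding gN[OF x(1) x1] DDn[OF x(1) x1] by (simp add: pq)
      also have "\<dots> = (1-x) * N x / Dn x" using pos by simp
      finally show ?thesis unfolding N_def Dn_def .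
    next
      case False
      hence "g x = 0" using gnn[OF x] by simp
      hence "N x = 0" using gN[OF x(1) x1] x1 by simp
      thus ?thesis using hform0[of x] False unfolding N_def by simp
    qed
  qed
  have Nw: "N (w i) > 0" using gN[OF wi] fpos fw wi by (simp add: zero_less_mult_iff)
  have ab: "a > 0 \<or> b > 0"
  proof (rule ccontr)
    assume "\<not> (a > 0 \<or> b > 0)"
    hence "a = 0" "b = 0" using a0 b0 by auto
    thus False using Nw unfolding N_def by simp
  qed
  have ray: "g x * (\<Sum>r<p. u r * u r) \<le> (\<Sum>r<p. \<Sum>c<p. u r * info_mat X nu (wpath w i x) $$ (r,c) * u c) * D x"
    if "0 \<le> x" "x \<le> 1" "g x > 0" "(\<Sum>r<p. u r * u r) > 0" for x u
  proof -
    have "(\<Sum>j<p. det (mat_delete (info_mat X nu (wpath w i x)) j j)) = D x"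
      unfolding D_def gj_def fdet_minus_def fdet_def using mat_delete_info[OF X] by simp
    with rayleigh[OF X wnn[OF that(1,2)] _ that(4)] that(3) show ?thesis unfolding g_def fdet_def by simp
  qed
  have F6: "\<not> (b = 0 \<and> B = 0)"
  proof
    assume bB: "b = 0 \<and> B = 0"
    have wi0: "w i > 0"
    proof (rule ccontr)
      assume "\<not> w i > 0" hence "w i = 0" using wi by simp
      hence "b = fdet X nu w" unfolding b_def b_const_def by simp
      thus False using fpos bB by simp
    qed
    have aP: "a > 0" using Nw bB wi0 unfolding N_def by (simp add: zero_less_mult_iff)
    have AP: "A > 0" using NDn[OF wi Nw] bB wi0 unfolding Dn_def by (simp add: zero_less_mult_iff)
    define G where "G = info_mat X nu (wpath w i 0)"
    have Gc: "G \<in> carrier_mat p p" unfolding G_def by (rule info_mat_carrier[OF X])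
    have detG: "det G = 0" using bdef bB unfolding g_def fdet_def G_def by simp
    obtain v where v: "v \<in> carrier_vec p" "v \<noteq> 0\<^sub>v p" "G *\<^sub>v v = 0\<^sub>v p"
      using det_0_iff_vec_prod_zero_field[OF Gc] detG by blast
    define u :: "nat \<Rightarrow> real" where "u r = v $ r" for r
    have Upos: "(\<Sum>r<p. u r * u r) > 0" unfolding u_def by (rule sumsq_pos[OF v(1,2)])
    have qG: "(\<Sum>r<p. \<Sum>c<p. u r * G $$ (r,c) * u c) = 0"
    proof -
      have "(\<Sum>r<p. \<Sum>c<p. u r * G $$ (r,c) * u c) = (\<Sum>r<p. u r * (G *\<^sub>v v) $ r)"
      proof (intro sum.cong refl)
        fix r assume r: "r \<in> {..<p}"
        have "(G *\<^sub>v v) $ r = (\<Sum>c<p. G $$ (r,c) * u c)"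
          using r Gc v(1) by (auto simp: u_def scalar_prod_def atLeast0LessThan)
        thus "(\<Sum>c<p. u r * G $$ (r,c) * u c) = u r * (G *\<^sub>v v) $ r"
          by (simp add: sum_distrib_left mult.assoc)
      qed
      also have "\<dots> = 0" using v(3) by simp
      finally show ?thesis .
    qed
    define K where "K = nu i * (\<Sum>r<p. X $$ (i,r) * u r)^2"
    have K0: "K \<ge> 0" unfolding K_def using nui by simp
    define U where "U = (\<Sum>r<p. u r * u r)"
    have ineq: "(1-x) * (a * U) \<le> (K * A) * x" if x: "0 < x" "x < 1" for x
    proof -
      have Nx: "N x = x * a" unfolding N_def using bB by simp
      have gx: "g x = (1-x)^(p-1) * (x * a)" using gN[of x] x Nx by simp
      have gxpos: "g x > 0" using gx x aP by simp
      have Dx: "D x = (1-x)^(p-2) * (x * A)" using DDn[of x] x bB unfolding Dn_def by simp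
      have qx: "(\<Sum>r<p. \<Sum>c<p. u r * info_mat X nu (wpath w i x) $$ (r,c) * u c) = x * K"
        using qf_path[OF X i, of u nu w x] qG unfolding G_def K_def by simp
      have "g x * U \<le> (x * K) * D x" using ray[of x u] x gxpos Upos qx unfolding U_def by simp
      hence le: "(1-x)^(p-1) * (x*a) * U \<le> x * K * ((1-x)^(p-2) * (x*A))" unfolding gx Dx .
      define c where "c = (1-x)^(p-2) * x"
      have c0: "c > 0" unfolding c_def using x by simp
      have e1: "(1-x)^(p-1) * (x*a) * U = c * ((1-x)*(a*U))" unfolding c_def pq by (simp add: mult_ac)
      have e2: "x * K * ((1-x)^(p-2) * (x*A)) = c * ((K*A)*x)" unfolding c_def pq by (simp add: mult_ac)
      show ?thesis using le c0 unfolding e1 e2 by simp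
    qed
    show False by (rule small_x[of "a * U" "K * A"]) (use aP Upos K0 AP ineq U_def in auto)
  qed
  have Bpos: "B > 0"
  proof (cases "b > 0")
    case True
    have "N 0 > 0" using True unfolding N_def by simp
    hence "Dn 0 > 0" using NDn[of 0] by simp
    thus ?thesis unfolding Dn_def by simp
  next
    case False thus ?thesis using F6 b0 B0 by auto
  qed
  have AA0: "A = 0 \<Longrightarrow> a = 0"
  proof (rule ccontr)
    assume A: "A = 0" and "a \<noteq> 0"
    hence aP: "a > 0" using a0 by simp
    obtain u where u: "(\<Sum>r<p. X$$(i,r) * u r) = 0" "(\<Sum>r<p. u r * u r) > 0"
      using perp_exists[OF p2, of "\<lambda>r. X$$(i,r)"] by auto
    define U where "U = (\<Sum>r<p. u r * u r)"
    define K where "K = (\<Sum>r<p. \<Sum>c<p. u r * info_mat X nu (wpath w i 0) $$ (r,c) * u c)"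
    have K0: "K \<ge> 0" unfolding K_def by (rule gram_psd[OF X wnn[of 0]]) auto
    have ineq: "x * (a * U) \<le> (K * B) * (1 - x)" if x: "0 < x" "x < 1" for x
    proof -
      have Nge: "N x \<ge> x * a" unfolding N_def using b0 x by simp
      have Npos: "N x > 0" using Nge x aP by (smt (verit) mult_pos_pos)
      have gpos: "g x > 0" using gN[of x] x Npos by simp
      have Dx: "D x = (1-x)^(p-2) * ((1-x) * B)" using DDn[of x] x A unfolding Dn_def by simp
      have qx: "(\<Sum>r<p. \<Sum>c<p. u r * info_mat X nu (wpath w i x) $$ (r,c) * u c) = (1-x) * K"
        using qf_path[OF X i, of u nu w x] u(1) unfolding K_def by simp
      have "g x * U \<le> ((1-x) * K) * D x" using ray[of x u] x gpos u(2) qx unfolding U_def by simp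
      moreover have gx: "g x = (1-x)^(p-1) * N x" using gN[of x] x by simp
      ultimately have le: "(1-x)^(p-1) * N x * U \<le> (1-x) * K * ((1-x)^(p-2) * ((1-x) * B))"
        unfolding Dx by simp
      define c where "c = (1-x)^(p-1)"
      have c0: "c > 0" unfolding c_def using x by simp
      have e2: "(1-x) * K * ((1-x)^(p-2) * ((1-x) * B)) = c * ((K*B)*(1-x))" unfolding c_def pq by (simp add: mult_ac)
      have "c * (N x * U) \<le> c * ((K*B)*(1-x))" using le unfolding e2 c_def by (simp add: mult_ac)
      hence "N x * U \<le> (K*B)*(1-x)" using c0 by simp
      moreover have "x * a * U \<le> N x * U" using Nge u(2) U_def by (intro mult_right_mono) auto
      ultimately show ?thesis by (simp add: mult_ac)
    qed
    show False by (rule near1[of "a * U" "K * B"]) (use aP u(2) K0 B0 ineq U_def in auto)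
  qed
  show ?thesis
    by (rule oned[OF a0 b0 A0 Bpos AA0 ab hform])
qed

end
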